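(* Let $Y_i=\kappa_i\mu_{0,i}+n^{-1/2}Z_i$, $i\ge1$, with $Z_i$ i.i.d. standard normal, $\mu_0\in\ell_2$, and $(\kappa_i)$ satisfying $C^{-1}i^{-p}\le\kappa_i\le Ci^{-p}$ for some $p\ge0$, $C\ge1$. Define \[ \mathbb{M}_n(\alpha)=\sum_{i=1}^{\infty}\frac{n\log i}{i^{1+2\alpha}\kappa_i^{-2}+n}-\sum_{i=1}^{\infty}\frac{n^2i^{1+2\alpha}\kappa_i^{-2}\log i}{(i^{1+2\alpha}\kappa_i^{-2}+n)^2}Y_i^2 \] and \[ h_n(\alpha)=\frac{1+2\alpha+2p}{n^{1/(1+2\alpha+2p)}\log n}\sum_{i=1}^{\infty}\frac{n^2 i^{1+2\alpha}\mu_{0,i}^2\log i}{(i^{1+2\alpha}\kappa_i^{-2}+n)^2}. \] Then for any $0<\alpha_1<\alpha_2<\infty$, \[ \operatorname{var}_0\Big(\frac{(1+2\alpha_1+2p)\mathbb{M}_n(\alpha_1)}{n^{1/(1+2\alpha_1+2p)}}-\frac{(1+2\alpha_2+2p)\mathbb{M}_n(\alpha_2)}{n^{1/(1+2\alpha_2+2p)}}\Big)\lesssim(\alpha_1-\alpha_2)^2(\log n)^4\sup_{\alpha\in[\alpha_1,\alpha_2]}n^{-1/(1+2\alpha+2p)}\big(1+h_n(\alpha)\big), \] with a constant that does not depend on $\alpha$ and $\mu_0$.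
   Context: $\operatorname{var}_0$ is the variance under the law of $Y$ with true parameter $\mu_0$. $a\lesssim b$ means $a\le Kb$ for a constant $K>0$. *)

theory Defs
  imports "HOL-Probability.Probability"
begin

text \<open>Variance of a real random variable X on the measure space M
  (literal unfolding of the locale abbreviation prob_space.variance).\<close>
definition var_on :: "'a measure \<Rightarrow> ('a \<Rightarrow> real) \<Rightarrow> real" where
  "var_on M X = (LINT x|M. (X x - (LINT y|M. X y))\<^sup>2)"

definition obsY :: "(nat \<Rightarrow> real) \<Rightarrow> (nat \<Rightarrow> real) \<Rightarrow> nat \<Rightarrow> (nat \<Rightarrow> 'a \<Rightarrow> real) \<Rightarrow> nat \<Rightarrow> 'a \<Rightarrow> real" where
  "obsY \<kappa> \<mu> n Z i \<omega> = \<kappa> i * \<mu> i + Z i \<omega> / sqrt (real n)"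

text \<open>M_n(alpha); sums over i = 1, 2, ... written as sums over Suc j.\<close>
definition Mn :: "(nat \<Rightarrow> real) \<Rightarrow> nat \<Rightarrow> (nat \<Rightarrow> real) \<Rightarrow> real \<Rightarrow> real" where
  "Mn \<kappa> n Y \<alpha> =
     (\<Sum>j. real n * ln (real (Suc j)) /
            (real (Suc j) powr (1 + 2*\<alpha>) * inverse ((\<kappa> (Suc j))\<^sup>2) + real n))
   - (\<Sum>j. (real n)\<^sup>2 * real (Suc j) powr (1 + 2*\<alpha>) * inverse ((\<kappa> (Suc j))\<^sup>2) * ln (real (Suc j)) /
            (real (Suc j) powr (1 + 2*\<alpha>) * inverse ((\<kappa> (Suc j))\<^sup>2) + real n)\<^sup>2
            * (Y (Suc j))\<^sup>2)"

definition hn :: "(nat \<Rightarrow> real) \<Rightarrow> real \<Rightarrow> (nat \<Rightarrow> real) \<Rightarrow> nat \<Rightarrow> real \<Rightarrow> real" where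
  "hn \<kappa> p \<mu> n \<alpha> =
     (1 + 2*\<alpha> + 2*p) / (real n powr (1 / (1 + 2*\<alpha> + 2*p)) * ln (real n))
   * (\<Sum>j. (real n)\<^sup>2 * real (Suc j) powr (1 + 2*\<alpha>) * (\<mu> (Suc j))\<^sup>2 * ln (real (Suc j)) /
            (real (Suc j) powr (1 + 2*\<alpha>) * inverse ((\<kappa> (Suc j))\<^sup>2) + real n)\<^sup>2)"

end

theory Submission
  imports Defs "HOL-Analysis.Analysis" "HOL-Analysis.Harmonic_Numbers"
begin

lemma gauss_moments:
  assumes P: "prob_space M" and D: "distributed M lborel X (\<lambda>x. ennreal (std_normal_density x))"
  shows "integrable M (\<lambda>\<omega>. X \<omega> ^ k)"
    "(\<integral>\<omega>. X \<omega> ^ k \<partial>M) = (\<integral>x. std_normal_density x * x ^ k \<partial>lborel)"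
proof -
  have m: "(\<lambda>x::real. x ^ k) \<in> borel_measurable lborel" by simp
  show "integrable M (\<lambda>\<omega>. X \<omega> ^ k)"
    using distributed_integrable[OF D m] integrable_std_normal_moment[of k] by simp
  show "(\<integral>\<omega>. X \<omega> ^ k \<partial>M) = (\<integral>x. std_normal_density x * x ^ k \<partial>lborel)"
    using distributed_integral[OF D m] by simp
qed

lemma gauss_vals:
  assumes P: "prob_space M" and D: "distributed M lborel X (\<lambda>x. ennreal (std_normal_density x))"
  shows "(\<integral>\<omega>. X \<omega> \<partial>M) = 0" "(\<integral>\<omega>. X \<omega>^2 \<partial>M) = 1" "(\<integral>\<omega>. X \<omega>^3 \<partial>M) = 0" "(\<integral>\<omega>. X \<omega>^4 \<partial>M) = 3"
proof -
  have "(\<integral>\<omega>. X \<omega> ^ 1 \<partial>M) = 0" using gauss_moments(2)[OF P D, of 1] integral_std_normal_moment_odd[of 0] by simp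
  then show "(\<integral>\<omega>. X \<omega> \<partial>M) = 0" by simp
  show "(\<integral>\<omega>. X \<omega>^2 \<partial>M) = 1" using gauss_moments(2)[OF P D, of 2] integral_std_normal_moment_even[of 1] by simp
  show "(\<integral>\<omega>. X \<omega>^3 \<partial>M) = 0" using gauss_moments(2)[OF P D, of 3] integral_std_normal_moment_odd[of 1] by simp
  show "(\<integral>\<omega>. X \<omega>^4 \<partial>M) = 3" using gauss_moments(2)[OF P D, of 4] integral_std_normal_moment_even[of 2] by (simp add: fact_numeral)
qed

lemma poly4_integral:
  assumes P: "prob_space M" and D: "distributed M lborel X (\<lambda>x. ennreal (std_normal_density x))"
  shows "integrable M (\<lambda>\<omega>. c0 + c1 * X \<omega> + c2 * X \<omega>^2 + c3 * X \<omega>^3 + c4 * X \<omega>^4)"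
    "(\<integral>\<omega>. c0 + c1 * X \<omega> + c2 * X \<omega>^2 + c3 * X \<omega>^3 + c4 * X \<omega>^4 \<partial>M) = c0 + c2 + 3 * c4"
proof -
  interpret prob_space M by fact
  have i: "\<And>k. integrable M (\<lambda>\<omega>. X \<omega> ^ k)" using gauss_moments(1)[OF P D] .
  have i1: "integrable M (\<lambda>\<omega>. X \<omega>)" using i[of 1] by simp
  note v = gauss_vals[OF P D]
  show "integrable M (\<lambda>\<omega>. c0 + c1 * X \<omega> + c2 * X \<omega>^2 + c3 * X \<omega>^3 + c4 * X \<omega>^4)"
    using i i1 by (intro Bochner_Integration.integrable_add integrable_mult_right integrable_const) auto
  have "(\<integral>\<omega>. c0 + c1 * X \<omega> + c2 * X \<omega>^2 + c3 * X \<omega>^3 + c4 * X \<omega>^4 \<partial>M)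
     = (\<integral>\<omega>. c0 + c1 * X \<omega> + c2 * X \<omega>^2 + c3 * X \<omega>^3 \<partial>M) + (\<integral>\<omega>. c4 * X \<omega>^4 \<partial>M)"
    using i i1 by (intro Bochner_Integration.integral_add) (auto intro!: Bochner_Integration.integrable_add)
  also have "(\<integral>\<omega>. c0 + c1 * X \<omega> + c2 * X \<omega>^2 + c3 * X \<omega>^3 \<partial>M)
     = (\<integral>\<omega>. c0 + c1 * X \<omega> + c2 * X \<omega>^2 \<partial>M) + (\<integral>\<omega>. c3 * X \<omega>^3 \<partial>M)"
    using i i1 by (intro Bochner_Integration.integral_add) (auto intro!: Bochner_Integration.integrable_add)
  also have "(\<integral>\<omega>. c0 + c1 * X \<omega> + c2 * X \<omega>^2 \<partial>M)
     = (\<integral>\<omega>. c0 + c1 * X \<omega> \<partial>M) + (\<integral>\<omega>. c2 * X \<omega>^2 \<partial>M)"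
    using i i1 by (intro Bochner_Integration.integral_add) (auto intro!: Bochner_Integration.integrable_add)
  also have "(\<integral>\<omega>. c0 + c1 * X \<omega> \<partial>M) = (\<integral>\<omega>. c0 \<partial>M) + (\<integral>\<omega>. c1 * X \<omega> \<partial>M)"
    using i i1 by (intro Bochner_Integration.integral_add) auto
  finally show "(\<integral>\<omega>. c0 + c1 * X \<omega> + c2 * X \<omega>^2 + c3 * X \<omega>^3 + c4 * X \<omega>^4 \<partial>M) = c0 + c2 + 3 * c4"
    using v prob_space by simp
qed

lemma sq_expand: "r > (0::real) \<Longrightarrow> ((a + x/r)^2 - (a^2 + 1/r^2))^2 = 1/(r^2)^2 + (-4*a/(r * r^2)) * x + (4*a^2/r^2 - 2/(r^2)^2) * x^2
       + (4*a/(r * r^2)) * x^3 + (1/(r^2)^2) * x^4"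
  by (simp add: field_simps) algebra

lemma V_facts:
  fixes a N :: real
  assumes P: "prob_space M" and D: "distributed M lborel X (\<lambda>x. ennreal (std_normal_density x))"
    and N: "N > 0"
  defines "V \<equiv> \<lambda>\<omega>. (a + X \<omega> / sqrt N)^2 - (a^2 + 1/N)"
  shows "integrable M V" "(\<integral>\<omega>. V \<omega> \<partial>M) = 0"
    "integrable M (\<lambda>\<omega>. (V \<omega>)^2)" "(\<integral>\<omega>. (V \<omega>)^2 \<partial>M) = 4*a^2/N + 2/N^2"
proof -
  obtain r where r: "r > 0" "N = r^2" using N by (intro that[of "sqrt N"]) auto
  have sr: "sqrt N = r" using r by simp
  have e1: "V = (\<lambda>\<omega>. (-1/N) + (2*a/sqrt N) * X \<omega> + (1/N) * X \<omega>^2 + 0 * X \<omega>^3 + 0 * X \<omega>^4)"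
    unfolding V_def sr using r by (auto simp: fun_eq_iff field_simps power2_eq_square)
  have e2: "(\<lambda>\<omega>. (V \<omega>)^2) = (\<lambda>\<omega>. (1/N^2) + (-4*a/(sqrt N * N)) * X \<omega> + (4*a^2/N - 2/N^2) * X \<omega>^2
       + (4*a/(sqrt N * N)) * X \<omega>^3 + (1/N^2) * X \<omega>^4)"
    unfolding V_def sr r(2) using r by (simp add: fun_eq_iff sq_expand)
  show "integrable M V" unfolding e1 by (rule poly4_integral(1)[OF P D])
  show "(\<integral>\<omega>. V \<omega> \<partial>M) = 0" unfolding e1 by (subst poly4_integral(2)[OF P D]) (use N in simp)
  show "integrable M (\<lambda>\<omega>. (V \<omega>)^2)" unfolding e2 by (rule poly4_integral(1)[OF P D])
  show "(\<integral>\<omega>. (V \<omega>)^2 \<partial>M) = 4*a^2/N + 2/N^2" unfolding e2 by (subst poly4_integral(2)[OF P D]) (use N in \<open>simp add: field_simps\<close>)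
qed

lemma indep_pair_integral:
  fixes Z :: "nat \<Rightarrow> 'a \<Rightarrow> real" and \<phi> \<psi> :: "real \<Rightarrow> real"
  assumes P: "prob_space M" and I: "prob_space.indep_vars M (\<lambda>_. borel) Z UNIV"
    and ik: "i \<noteq> k" and m: "\<phi> \<in> borel_measurable borel" "\<psi> \<in> borel_measurable borel"
    and i1: "integrable M (\<lambda>\<omega>. \<phi> (Z i \<omega>))" and i2: "integrable M (\<lambda>\<omega>. \<psi> (Z k \<omega>))"
  shows "(\<integral>\<omega>. \<phi> (Z i \<omega>) * \<psi> (Z k \<omega>) \<partial>M) = (\<integral>\<omega>. \<phi> (Z i \<omega>) \<partial>M) * (\<integral>\<omega>. \<psi> (Z k \<omega>) \<partial>M)"
    "integrable M (\<lambda>\<omega>. \<phi> (Z i \<omega>) * \<psi> (Z k \<omega>))"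
proof -
  interpret prob_space M by fact
  have "indep_var borel ((\<lambda>f. \<phi> (f i)) \<circ> (\<lambda>\<omega>. restrict (\<lambda>i. Z i \<omega>) {i}))
      borel ((\<lambda>f. \<psi> (f k)) \<circ> (\<lambda>\<omega>. restrict (\<lambda>i. Z i \<omega>) {k}))"
    using ik m by (intro indep_var_compose[OF indep_var_restrict[OF I]]) auto
  also have "((\<lambda>f. \<phi> (f i)) \<circ> (\<lambda>\<omega>. restrict (\<lambda>i. Z i \<omega>) {i})) = (\<lambda>\<omega>. \<phi> (Z i \<omega>))" by auto
  also have "((\<lambda>f. \<psi> (f k)) \<circ> (\<lambda>\<omega>. restrict (\<lambda>i. Z i \<omega>) {k})) = (\<lambda>\<omega>. \<psi> (Z k \<omega>))" by auto
  finally have iv: "indep_var borel (\<lambda>\<omega>. \<phi> (Z i \<omega>)) borel (\<lambda>\<omega>. \<psi> (Z k \<omega>))" .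
  show "(\<integral>\<omega>. \<phi> (Z i \<omega>) * \<psi> (Z k \<omega>) \<partial>M) = (\<integral>\<omega>. \<phi> (Z i \<omega>) \<partial>M) * (\<integral>\<omega>. \<psi> (Z k \<omega>) \<partial>M)"
    by (rule indep_var_lebesgue_integral[OF iv i1 i2])
  show "integrable M (\<lambda>\<omega>. \<phi> (Z i \<omega>) * \<psi> (Z k \<omega>))"
    by (rule indep_var_integrable[OF iv i1 i2])
qed

lemma sum_sq_expect:
  fixes Z :: "nat \<Rightarrow> 'a \<Rightarrow> real" and a d :: "nat \<Rightarrow> real" and N :: real
  assumes P: "prob_space M" and I: "prob_space.indep_vars M (\<lambda>_. borel) Z UNIV"
    and D: "\<And>i. distributed M lborel (Z i) (\<lambda>x. ennreal (std_normal_density x))"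
    and N: "N > 0"
  defines "V \<equiv> \<lambda>j \<omega>. (a (Suc j) + Z (Suc j) \<omega> / sqrt N)^2 - (a (Suc j)^2 + 1/N)"
  shows "integrable M (\<lambda>\<omega>. (\<Sum>j<m. d j * V j \<omega>)^2)"
    "(\<integral>\<omega>. (\<Sum>j<m. d j * V j \<omega>)^2 \<partial>M) = (\<Sum>j<m. (d j)^2 * (4 * (a (Suc j))^2 / N + 2 / N^2))"
proof -
  interpret prob_space M by fact
  have E: "integrable M (\<lambda>\<omega>. V j \<omega> * V k \<omega>) \<and>
      (\<integral>\<omega>. V j \<omega> * V k \<omega> \<partial>M) = (if j = k then 4 * (a (Suc j))^2 / N + 2 / N^2 else 0)" for j k
  proof (cases "j = k")
    case True
    have "(\<lambda>\<omega>. V j \<omega> * V k \<omega>) = (\<lambda>\<omega>. (V j \<omega>)^2)" using True by (simp add: power2_eq_square)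
    then show ?thesis using V_facts(3,4)[OF P D[of "Suc j"] N, of "a (Suc j)"] True unfolding V_def by simp
  next
    case False
    let ?\<phi> = "\<lambda>x. (a (Suc j) + x / sqrt N)^2 - (a (Suc j)^2 + 1/N)"
    let ?\<psi> = "\<lambda>x. (a (Suc k) + x / sqrt N)^2 - (a (Suc k)^2 + 1/N)"
    have i1: "integrable M (\<lambda>\<omega>. ?\<phi> (Z (Suc j) \<omega>))" using V_facts(1)[OF P D[of "Suc j"] N, of "a (Suc j)"] by simp
    have i2: "integrable M (\<lambda>\<omega>. ?\<psi> (Z (Suc k) \<omega>))" using V_facts(1)[OF P D[of "Suc k"] N, of "a (Suc k)"] by simp
    have e1: "(\<integral>\<omega>. ?\<phi> (Z (Suc j) \<omega>) \<partial>M) = 0" using V_facts(2)[OF P D[of "Suc j"] N, of "a (Suc j)"] by simp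
    have "Suc j \<noteq> Suc k" using False by simp
    from indep_pair_integral[OF P I this _ _ i1 i2] e1 show ?thesis
      using False unfolding V_def by simp
  qed
  have sq: "(\<lambda>\<omega>. (\<Sum>j<m. d j * V j \<omega>)^2) = (\<lambda>\<omega>. \<Sum>j<m. \<Sum>k<m. d j * d k * (V j \<omega> * V k \<omega>))"
    by (auto simp: fun_eq_iff power2_eq_square sum_product algebra_simps)
  show "integrable M (\<lambda>\<omega>. (\<Sum>j<m. d j * V j \<omega>)^2)"
    unfolding sq using E by (intro Bochner_Integration.integrable_sum integrable_mult_right) auto
  have "(\<integral>\<omega>. (\<Sum>j<m. d j * V j \<omega>)^2 \<partial>M) = (\<Sum>j<m. \<Sum>k<m. d j * d k * (\<integral>\<omega>. V j \<omega> * V k \<omega> \<partial>M))"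
  proof -
    have ii: "integrable M (\<lambda>\<omega>. d j * d k * (V j \<omega> * V k \<omega>))" for j k
      using E by (intro integrable_mult_right) auto
    have "(\<integral>\<omega>. (\<Sum>j<m. \<Sum>k<m. d j * d k * (V j \<omega> * V k \<omega>)) \<partial>M)
        = (\<Sum>j<m. (\<integral>\<omega>. (\<Sum>k<m. d j * d k * (V j \<omega> * V k \<omega>)) \<partial>M))"
      using ii by (intro Bochner_Integration.integral_sum Bochner_Integration.integrable_sum) auto
    also have "\<dots> = (\<Sum>j<m. \<Sum>k<m. (\<integral>\<omega>. d j * d k * (V j \<omega> * V k \<omega>) \<partial>M))"
      using ii by (intro sum.cong refl Bochner_Integration.integral_sum) auto
    finally show ?thesis unfolding sq by simp
  qed
  also have "\<dots> = (\<Sum>j<m. \<Sum>k<m. if j = k then d j * d k * (4 * (a (Suc j))^2 / N + 2 / N^2) else 0)"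
    using E by (intro sum.cong refl) auto
  also have "\<dots> = (\<Sum>j<m. (d j)^2 * (4 * (a (Suc j))^2 / N + 2 / N^2))"
    by (intro sum.cong refl) (auto simp: power2_eq_square)
  finally show "(\<integral>\<omega>. (\<Sum>j<m. d j * V j \<omega>)^2 \<partial>M) = (\<Sum>j<m. (d j)^2 * (4 * (a (Suc j))^2 / N + 2 / N^2))" .
qed

lemma var_on_le:
  fixes X :: "'a \<Rightarrow> real"
  assumes P: "prob_space M" and X[measurable]: "X \<in> borel_measurable M"
    and B: "B \<ge> 0" and le: "(\<integral>\<^sup>+\<omega>. ennreal ((X \<omega> - c)^2) \<partial>M) \<le> ennreal B"
  shows "var_on M X \<le> B"
proof -
  interpret prob_space M by fact
  have i2: "integrable M (\<lambda>\<omega>. (X \<omega> - c)^2)"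
  proof (rule integrableI_nonneg)
    show "(\<integral>\<^sup>+\<omega>. ennreal ((X \<omega> - c)^2) \<partial>M) < \<infinity>"
      using le by (rule order.strict_trans1) simp
  qed auto
  have i1: "integrable M (\<lambda>\<omega>. X \<omega> - c)"
  proof (rule Bochner_Integration.integrable_bound[OF Bochner_Integration.integrable_add[OF i2 integrable_const[of 1]]])
    show "AE x in M. norm (X x - c) \<le> norm ((X x - c)^2 + 1)"
    proof
      fix x have "\<bar>X x - c\<bar> \<le> (X x - c)^2 + 1"
      proof (cases "\<bar>X x - c\<bar> \<le> 1")
        case True then show ?thesis by (smt (verit) zero_le_power2)
      next
        case False
        then have "\<bar>X x - c\<bar> * 1 \<le> \<bar>X x - c\<bar> * \<bar>X x - c\<bar>" by (intro mult_left_mono) auto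
        then show ?thesis by (simp add: power2_eq_square)
      qed
      then show "norm (X x - c) \<le> norm ((X x - c)^2 + 1)" by simp
    qed
  qed simp
  have iX: "integrable M X" using Bochner_Integration.integrable_add[OF i1 integrable_const[of c]] by simp
  define m where "m = (\<integral>\<omega>. X \<omega> \<partial>M)"
  have e: "(\<lambda>\<omega>. (X \<omega> - m)^2) = (\<lambda>\<omega>. (X \<omega> - c)^2 + (- 2*(m-c)) * (X \<omega> - c) + (m-c)^2)"
    by (auto simp: fun_eq_iff power2_eq_square algebra_simps)
  have Ec: "(\<integral>\<omega>. X \<omega> - c \<partial>M) = m - c" using iX by (simp add: m_def prob_space)
  have "var_on M X = (\<integral>\<omega>. (X \<omega> - c)^2 \<partial>M) - (m-c)^2"
  proof -
    have "var_on M X = (\<integral>\<omega>. (X \<omega> - c)^2 + (- 2*(m-c)) * (X \<omega> - c) + (m-c)^2 \<partial>M)"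
      unfolding var_on_def m_def[symmetric] e ..
    also have "\<dots> = (\<integral>\<omega>. (X \<omega> - c)^2 \<partial>M) + (- 2*(m-c)) * (\<integral>\<omega>. X \<omega> - c \<partial>M) + (m-c)^2"
      using i1 i2 by (simp add: prob_space)
    also have "\<dots> = (\<integral>\<omega>. (X \<omega> - c)^2 \<partial>M) - (m-c)^2"
      unfolding Ec by (simp add: power2_eq_square algebra_simps)
    finally show ?thesis .
  qed
  also have "\<dots> \<le> (\<integral>\<omega>. (X \<omega> - c)^2 \<partial>M)" by simp
  also have "\<dots> \<le> B"
  proof -
    have "ennreal (\<integral>\<omega>. (X \<omega> - c)^2 \<partial>M) = (\<integral>\<^sup>+\<omega>. ennreal ((X \<omega> - c)^2) \<partial>M)"
      using i2 by (intro nn_integral_eq_integral[symmetric]) auto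
    with le B show ?thesis by (simp add: ennreal_le_iff[symmetric])
  qed
  finally show ?thesis .
qed

lemma Q_nn_integral:
  fixes Z :: "nat \<Rightarrow> 'a \<Rightarrow> real" and b N :: real
  assumes P: "prob_space M"
    and D: "distributed M lborel X (\<lambda>x. ennreal (std_normal_density x))"
    and N: "N > 0"
  shows "(\<integral>\<^sup>+\<omega>. ennreal ((b + X \<omega> / sqrt N)^2) \<partial>M) = ennreal (b^2 + 1/N)"
proof -
  interpret prob_space M by fact
  note vf = V_facts[OF P D N, of b]
  have e: "(\<lambda>\<omega>. (b + X \<omega> / sqrt N)^2) = (\<lambda>\<omega>. ((b + X \<omega> / sqrt N)^2 - (b^2 + 1/N)) + (b^2 + 1/N))" by simp
  have int: "integrable M (\<lambda>\<omega>. (b + X \<omega> / sqrt N)^2)"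
    by (subst e, rule Bochner_Integration.integrable_add[OF vf(1)]) simp
  have "(\<integral>\<omega>. (b + X \<omega> / sqrt N)^2 \<partial>M) = b^2 + 1/N"
    by (subst e, subst Bochner_Integration.integral_add[OF vf(1)]) (auto simp: vf(2) prob_space)
  then show ?thesis using nn_integral_eq_integral[OF int] by simp
qed

lemma ae_summable:
  fixes Z :: "nat \<Rightarrow> 'a \<Rightarrow> real" and a u :: "nat \<Rightarrow> real" and N :: real
  assumes P: "prob_space M"
    and D: "\<And>i. distributed M lborel (Z i) (\<lambda>x. ennreal (std_normal_density x))"
    and N: "N > 0" and u: "\<And>j. u j \<ge> 0" and s: "summable (\<lambda>j. u j * (a (Suc j)^2 + 1/N))"
  shows "AE \<omega> in M. summable (\<lambda>j. u j * (a (Suc j) + Z (Suc j) \<omega> / sqrt N)^2)"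
proof -
  interpret prob_space M by fact
  have m[measurable]: "Z i \<in> borel_measurable M" for i using distributed_measurable[OF D[of i]] by simp
  have "(\<integral>\<^sup>+\<omega>. (\<Sum>j. ennreal (u j * (a (Suc j) + Z (Suc j) \<omega> / sqrt N)^2)) \<partial>M)
     = (\<Sum>j. (\<integral>\<^sup>+\<omega>. ennreal (u j * (a (Suc j) + Z (Suc j) \<omega> / sqrt N)^2) \<partial>M))"
    by (intro nn_integral_suminf) measurable
  also have "\<dots> = (\<Sum>j. ennreal (u j * (a (Suc j)^2 + 1/N)))"
  proof (intro suminf_cong)
    fix j
    have "(\<integral>\<^sup>+\<omega>. ennreal (u j * (a (Suc j) + Z (Suc j) \<omega> / sqrt N)^2) \<partial>M)
       = (\<integral>\<^sup>+\<omega>. ennreal (u j) * ennreal ((a (Suc j) + Z (Suc j) \<omega> / sqrt N)^2) \<partial>M)"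
      using u by (intro nn_integral_cong) (simp add: ennreal_mult)
    also have "\<dots> = ennreal (u j) * (\<integral>\<^sup>+\<omega>. ennreal ((a (Suc j) + Z (Suc j) \<omega> / sqrt N)^2) \<partial>M)"
      by (intro nn_integral_cmult) measurable
    also have "\<dots> = ennreal (u j * (a (Suc j)^2 + 1/N))"
      using u N by (simp add: Q_nn_integral[OF P D N] ennreal_mult)
    finally show "(\<integral>\<^sup>+\<omega>. ennreal (u j * (a (Suc j) + Z (Suc j) \<omega> / sqrt N)^2) \<partial>M) = ennreal (u j * (a (Suc j)^2 + 1/N))" .
  qed
  also have "\<dots> = ennreal (\<Sum>j. u j * (a (Suc j)^2 + 1/N))"
    using u N s by (intro suminf_ennreal2) (auto intro!: mult_nonneg_nonneg add_nonneg_nonneg)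
  finally have fin: "(\<integral>\<^sup>+\<omega>. (\<Sum>j. ennreal (u j * (a (Suc j) + Z (Suc j) \<omega> / sqrt N)^2)) \<partial>M) \<noteq> \<infinity>" by simp
  have "AE \<omega> in M. (\<Sum>j. ennreal (u j * (a (Suc j) + Z (Suc j) \<omega> / sqrt N)^2)) \<noteq> \<infinity>"
    by (rule nn_integral_PInf_AE[OF _ fin]) measurable
  then show ?thesis
    by eventually_elim (rule summable_suminf_not_top, use u in auto)
qed

lemma prob_main:
  fixes Z :: "nat \<Rightarrow> 'a \<Rightarrow> real" and a u1 u2 :: "nat \<Rightarrow> real" and N c1 c2 e1 e2 S1 S2 B :: real
  assumes P: "prob_space M" and I: "prob_space.indep_vars M (\<lambda>_. borel) Z UNIV"
    and D: "\<And>i. distributed M lborel (Z i) (\<lambda>x. ennreal (std_normal_density x))"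
    and N: "N > 0" and u1: "\<And>j. u1 j \<ge> 0" and u2: "\<And>j. u2 j \<ge> 0"
    and s1: "summable (\<lambda>j. u1 j * (a (Suc j)^2 + 1/N))"
    and s2: "summable (\<lambda>j. u2 j * (a (Suc j)^2 + 1/N))"
    and B: "B \<ge> 0"
    and bnd: "\<And>m. (\<Sum>j<m. (c1 / e1 * u1 j - c2 / e2 * u2 j)^2 * (4 * (a (Suc j))^2 / N + 2 / N^2)) \<le> B"
  shows "var_on M (\<lambda>\<omega>. c1 * (S1 - (\<Sum>j. u1 j * (a (Suc j) + Z (Suc j) \<omega> / sqrt N)^2)) / e1
                      - c2 * (S2 - (\<Sum>j. u2 j * (a (Suc j) + Z (Suc j) \<omega> / sqrt N)^2)) / e2) \<le> B"
proof -
  interpret prob_space M by fact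
  have m[measurable]: "Z i \<in> borel_measurable M" for i using distributed_measurable[OF D[of i]] by simp
  define d where "d j = c1 / e1 * u1 j - c2 / e2 * u2 j" for j
  define e where "e j = a (Suc j)^2 + 1/N" for j
  define V where "V j \<omega> = (a (Suc j) + Z (Suc j) \<omega> / sqrt N)^2 - (a (Suc j)^2 + 1/N)" for j \<omega>
  define X where "X \<omega> = c1 * (S1 - (\<Sum>j. u1 j * (a (Suc j) + Z (Suc j) \<omega> / sqrt N)^2)) / e1
                      - c2 * (S2 - (\<Sum>j. u2 j * (a (Suc j) + Z (Suc j) \<omega> / sqrt N)^2)) / e2" for \<omega>
  define c where "c = c1 / e1 * S1 - c2 / e2 * S2 - (\<Sum>j. d j * e j)"
  define PS where "PS m \<omega> = (\<Sum>j<m. d j * V j \<omega>)" for m \<omega>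
  have Xm[measurable]: "X \<in> borel_measurable M" unfolding X_def by measurable
  have PSm[measurable]: "PS m \<in> borel_measurable M" for m unfolding PS_def V_def by measurable
  have se1: "summable (\<lambda>j. u1 j * e j)" using s1 unfolding e_def .
  have se2: "summable (\<lambda>j. u2 j * e j)" using s2 unfolding e_def .
  have sde: "summable (\<lambda>j. d j * e j)" unfolding d_def left_diff_distrib mult.assoc
    using se1 se2 by (intro summable_diff summable_mult)
  have AEconv: "AE \<omega> in M. (\<lambda>m. (PS m \<omega>)^2) \<longlonglongrightarrow> (X \<omega> - c)^2"
    using ae_summable[where a=a and u=u1 and N=N and Z=Z and M=M, OF P D N u1 s1] ae_summable[where a=a and u=u2 and N=N and Z=Z and M=M, OF P D N u2 s2]
  proof eventually_elim
    case (elim \<omega>)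
    define Q where "Q j = (a (Suc j) + Z (Suc j) \<omega> / sqrt N)^2" for j
    have q1: "summable (\<lambda>j. u1 j * Q j)" using elim(1) unfolding Q_def .
    have q2: "summable (\<lambda>j. u2 j * Q j)" using elim(2) unfolding Q_def .
    have QeV: "Q j = e j + V j \<omega>" for j unfolding Q_def e_def V_def by simp
    have sdQ: "summable (\<lambda>j. d j * Q j)" unfolding d_def left_diff_distrib mult.assoc
      using q1 q2 by (intro summable_diff summable_mult)
    have sdV: "summable (\<lambda>j. d j * V j \<omega>)"
    proof -
      have "(\<lambda>j. d j * V j \<omega>) = (\<lambda>j. d j * Q j - d j * e j)" by (auto simp: QeV algebra_simps)
      then show ?thesis using sdQ sde by (simp add: summable_diff)
    qed
    have sumdQ: "(\<Sum>j. d j * Q j) = c1/e1 * (\<Sum>j. u1 j * Q j) - c2/e2 * (\<Sum>j. u2 j * Q j)"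
    proof -
      have "(\<Sum>j. d j * Q j) = (\<Sum>j. c1/e1 * (u1 j * Q j) - c2/e2 * (u2 j * Q j))"
        unfolding d_def by (simp add: algebra_simps)
      also have "\<dots> = (\<Sum>j. c1/e1 * (u1 j * Q j)) - (\<Sum>j. c2/e2 * (u2 j * Q j))"
        by (rule suminf_diff[symmetric]) (intro summable_mult q1 q2)+
      also have "\<dots> = c1/e1 * (\<Sum>j. u1 j * Q j) - c2/e2 * (\<Sum>j. u2 j * Q j)"
        using suminf_mult[OF q1, of "c1/e1"] suminf_mult[OF q2, of "c2/e2"] by simp
      finally show ?thesis .
    qed
    have sumdQ2: "(\<Sum>j. d j * Q j) = (\<Sum>j. d j * e j) + (\<Sum>j. d j * V j \<omega>)"
      unfolding QeV distrib_left using sde sdV by (simp add: suminf_add)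
    have "X \<omega> = c1/e1 * S1 - c2/e2 * S2 - (c1/e1 * (\<Sum>j. u1 j * Q j) - c2/e2 * (\<Sum>j. u2 j * Q j))"
      unfolding X_def Q_def by (simp add: right_diff_distrib diff_divide_distrib)
    then have "X \<omega> - c = - (\<Sum>j. d j * V j \<omega>)"
      unfolding c_def sumdQ[symmetric] sumdQ2 by simp
    moreover have "(\<lambda>m. PS m \<omega>) \<longlonglongrightarrow> (\<Sum>j. d j * V j \<omega>)"
      unfolding PS_def using sdV by (simp add: summable_LIMSEQ)
    ultimately show ?case by (auto intro!: tendsto_eq_intros)
  qed
  have "(\<integral>\<^sup>+\<omega>. ennreal ((X \<omega> - c)^2) \<partial>M) = (\<integral>\<^sup>+\<omega>. liminf (\<lambda>m. ennreal ((PS m \<omega>)^2)) \<partial>M)"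
    using AEconv
  proof (intro nn_integral_cong_AE, eventually_elim)
    case (elim \<omega>)
    then have "(\<lambda>m. ennreal ((PS m \<omega>)^2)) \<longlonglongrightarrow> ennreal ((X \<omega> - c)^2)"
      by (intro tendsto_ennrealI)
    then show ?case by (intro lim_imp_Liminf[symmetric]) auto
  qed
  also have "\<dots> \<le> liminf (\<lambda>m. (\<integral>\<^sup>+\<omega>. ennreal ((PS m \<omega>)^2) \<partial>M))"
    by (intro nn_integral_liminf) measurable
  also have "\<dots> = liminf (\<lambda>m. ennreal (\<Sum>j<m. (d j)^2 * (4 * (a (Suc j))^2 / N + 2 / N^2)))"
  proof (intro arg_cong[where f=liminf] ext)
    fix m
    note ss = sum_sq_expect[where a=a and d=d and m=m, OF P I D N]
    show "(\<integral>\<^sup>+\<omega>. ennreal ((PS m \<omega>)^2) \<partial>M) = ennreal (\<Sum>j<m. (d j)^2 * (4 * (a (Suc j))^2 / N + 2 / N^2))"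
      using nn_integral_eq_integral[OF ss(1)] ss(2) unfolding PS_def V_def by simp
  qed
  also have "\<dots> \<le> ennreal B"
  proof -
    have "liminf (\<lambda>m. ennreal (\<Sum>j<m. (d j)^2 * (4 * (a (Suc j))^2 / N + 2 / N^2)))
       \<le> limsup (\<lambda>m. ennreal (\<Sum>j<m. (d j)^2 * (4 * (a (Suc j))^2 / N + 2 / N^2)))"
      by (intro Liminf_le_Limsup) simp
    also have "\<dots> \<le> ennreal B"
      using bnd unfolding d_def by (intro Limsup_bounded always_eventually allI ennreal_leI)
    finally show ?thesis .
  qed
  finally have "(\<integral>\<^sup>+\<omega>. ennreal ((X \<omega> - c)^2) \<partial>M) \<le> ennreal B" .
  from var_on_le[OF P Xm B this] show ?thesis unfolding X_def .
qed

definition gfun :: "real \<Rightarrow> real \<Rightarrow> real \<Rightarrow> real" where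
  "gfun l p \<alpha> = (1 + 2*\<alpha> + 2*p) * exp (- l / (1 + 2*\<alpha> + 2*p))"
definition gder :: "real \<Rightarrow> real \<Rightarrow> real \<Rightarrow> real" where
  "gder l p \<alpha> = 2 * exp (- l / (1 + 2*\<alpha> + 2*p)) * (1 + l / (1 + 2*\<alpha> + 2*p))"
definition Efun :: "real \<Rightarrow> real \<Rightarrow> real \<Rightarrow> real" where
  "Efun L q \<alpha> = exp ((1 + 2*\<alpha>) * L) * q"
definition wfun :: "real \<Rightarrow> real \<Rightarrow> real \<Rightarrow> real \<Rightarrow> real" where
  "wfun N L q \<alpha> = N^2 * Efun L q \<alpha> * L / (Efun L q \<alpha> + N)^2"
definition wder :: "real \<Rightarrow> real \<Rightarrow> real \<Rightarrow> real \<Rightarrow> real" where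
  "wder N L q \<alpha> = 2 * L * L * N^2 * Efun L q \<alpha> * (N - Efun L q \<alpha>) / (Efun L q \<alpha> + N)^3"

lemma gfun_deriv:
  assumes "1 + 2*\<alpha> + 2*p > 0"
  shows "(gfun l p has_real_derivative gder l p \<alpha>) (at \<alpha>)"
  unfolding gfun_def gder_def
  apply (rule derivative_eq_intros refl)+
  using assms apply simp
  apply (rule refl)+
  using assms apply (simp add: divide_simps)
  apply (simp add: algebra_simps)
  done

lemma Efun_deriv: "(Efun L q has_real_derivative 2 * L * Efun L q \<alpha>) (at \<alpha>)"
  unfolding Efun_def by (auto intro!: derivative_eq_intros)

lemma wfun_deriv:
  assumes q: "q > 0" and N: "N > 0"
  shows "(wfun N L q has_real_derivative wder N L q \<alpha>) (at \<alpha>)"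
proof -
  have Ep: "Efun L q \<alpha> > 0" using q unfolding Efun_def by simp
  have "((\<lambda>\<alpha>. N^2 * Efun L q \<alpha> * L / (Efun L q \<alpha> + N)^2) has_real_derivative
      ((N^2 * (2 * L * Efun L q \<alpha>) * L) * (Efun L q \<alpha> + N)^2 - N^2 * Efun L q \<alpha> * L * (2 * (Efun L q \<alpha> + N) * (2 * L * Efun L q \<alpha>))) / ((Efun L q \<alpha> + N)^2)^2) (at \<alpha>)"
    using Ep N by (auto intro!: derivative_eq_intros Efun_deriv simp: power2_eq_square)
  moreover have "((N^2 * (2 * L * Efun L q \<alpha>) * L) * (Efun L q \<alpha> + N)^2 - N^2 * Efun L q \<alpha> * L * (2 * (Efun L q \<alpha> + N) * (2 * L * Efun L q \<alpha>))) / ((Efun L q \<alpha> + N)^2)^2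
     = wder N L q \<alpha>"
  proof -
    have nz: "Efun L q \<alpha> + N \<noteq> 0" using Ep N by simp
    show ?thesis using nz unfolding wder_def by (simp add: field_simps) algebra
  qed
  ultimately show ?thesis unfolding wfun_def by simp
qed

lemma cs_ftc:
  fixes F f :: "real \<Rightarrow> real"
  assumes ab: "a \<le> b" and d: "\<And>x. x \<in> {a..b} \<Longrightarrow> (F has_real_derivative f x) (at x)"
    and c: "continuous_on {a..b} f"
  shows "(F b - F a)^2 \<le> (b - a) * integral {a..b} (\<lambda>x. (f x)^2)"
proof (cases "a = b")
  case True then show ?thesis by simp
next
  case False
  with ab have ab': "a < b" by simp
  have I: "integral {a..b} f = F b - F a"
    using fundamental_theorem_of_calculus[OF ab, of F f] d
    by (auto simp: has_real_derivative_iff_has_vector_derivative[symmetric] intro: has_field_derivative_at_within dest: integral_unique)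
  define k where "k = (F b - F a) / (b - a)"
  have i1: "f integrable_on {a..b}" using c by (rule integrable_continuous_interval)
  have i2: "(\<lambda>x. (f x)^2) integrable_on {a..b}"
    using c by (intro integrable_continuous_interval continuous_intros)
  have "0 \<le> integral {a..b} (\<lambda>x. (f x - k)^2)" by (rule integral_nonneg) (use c in \<open>auto intro!: integrable_continuous_interval continuous_intros\<close>)
  also have "integral {a..b} (\<lambda>x. (f x - k)^2) = integral {a..b} (\<lambda>x. (f x)^2 + (- 2 * k) * f x + k^2)"
    by (simp add: power2_eq_square algebra_simps)
  also have "\<dots> = integral {a..b} (\<lambda>x. (f x)^2) + (- 2 * k) * integral {a..b} f + (b - a) * k^2"
  proof -
    have i3: "(\<lambda>x. (- 2 * k) * f x) integrable_on {a..b}" using i1 by (rule integrable_on_mult_right)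
    have "integral {a..b} (\<lambda>x. (f x)^2 + (- 2 * k) * f x + k^2) = integral {a..b} (\<lambda>x. (f x)^2 + (- 2 * k) * f x) + integral {a..b} (\<lambda>x. k^2)"
      using i2 i3 by (intro integral_add integrable_add) auto
    also have "integral {a..b} (\<lambda>x. (f x)^2 + (- 2 * k) * f x) = integral {a..b} (\<lambda>x. (f x)^2) + integral {a..b} (\<lambda>x. (- 2 * k) * f x)"
      using i2 i3 by (intro integral_add) auto
    finally show ?thesis using ab by simp
  qed
  also have "\<dots> = integral {a..b} (\<lambda>x. (f x)^2) - (F b - F a)^2 / (b - a)"
  proof -
    have g: "\<And>(y::real) (t::real). t > 0 \<Longrightarrow> (- 2 * (y/t)) * y + t * (y/t)^2 = - (y^2)/t"
      by (simp add: field_simps power2_eq_square)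
    have "b - a > 0" using ab' by simp
    from g[OF this, of "F b - F a"] show ?thesis unfolding I k_def by simp
  qed
  finally show ?thesis using ab' by (simp add: field_simps)
qed

lemma weighted_ftc:
  fixes F f :: "nat \<Rightarrow> real \<Rightarrow> real" and v :: "nat \<Rightarrow> real"
  assumes ab: "a \<le> b" and d: "\<And>j x. x \<in> {a..b} \<Longrightarrow> (F j has_real_derivative f j x) (at x)"
    and c: "\<And>j. continuous_on {a..b} (f j)" and v: "\<And>j. v j \<ge> 0"
    and bd: "\<And>x. x \<in> {a..b} \<Longrightarrow> (\<Sum>j<m. v j * (f j x)^2) \<le> Bd"
  shows "(\<Sum>j<m. v j * (F j a - F j b)^2) \<le> (b - a)^2 * Bd"
proof -
  have "(\<Sum>j<m. v j * (F j a - F j b)^2) \<le> (\<Sum>j<m. v j * ((b - a) * integral {a..b} (\<lambda>x. (f j x)^2)))"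
    using cs_ftc[OF ab d c] v by (intro sum_mono mult_left_mono) (auto simp: power2_commute)
  also have "\<dots> = (b - a) * integral {a..b} (\<lambda>x. \<Sum>j<m. v j * (f j x)^2)"
    using c by (subst integral_sum) (auto simp: sum_distrib_left algebra_simps intro!: integrable_continuous_interval continuous_intros)
  also have "\<dots> \<le> (b - a) * integral {a..b} (\<lambda>x. Bd)"
    using ab bd c by (intro mult_left_mono integral_le) (auto intro!: integrable_continuous_interval continuous_intros)
  also have "\<dots> = (b - a)^2 * Bd" using ab by (simp add: power2_eq_square)
  finally show ?thesis .
qed

definition Fd :: "real \<Rightarrow> real \<Rightarrow> real \<Rightarrow> real \<Rightarrow> real \<Rightarrow> real \<Rightarrow> real" where
  "Fd N L q l p \<alpha> = gder l p \<alpha> * wfun N L q \<alpha> + gfun l p \<alpha> * wder N L q \<alpha>"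

lemma Efun_pos: "q > 0 \<Longrightarrow> Efun L q \<alpha> > 0" unfolding Efun_def by simp

lemma wfun_nonneg: "q > 0 \<Longrightarrow> N > 0 \<Longrightarrow> L \<ge> 0 \<Longrightarrow> wfun N L q \<alpha> \<ge> 0"
  unfolding wfun_def using Efun_pos[of q L \<alpha>] by simp

lemma Ffun_deriv:
  assumes "1 + 2*\<alpha> + 2*p > 0" "q > 0" "N > 0"
  shows "((\<lambda>\<alpha>. gfun l p \<alpha> * wfun N L q \<alpha>) has_real_derivative Fd N L q l p \<alpha>) (at \<alpha>)"
  unfolding Fd_def using gfun_deriv[OF assms(1)] wfun_deriv[OF assms(2,3)]
  by (auto intro!: derivative_eq_intros)

lemma Fd_cont:
  assumes "a \<ge> 0" "p \<ge> 0" "q > 0" "N > 0"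
  shows "continuous_on {a..b} (Fd N L q l p)"
proof -
  have E: "\<And>x. Efun L q x + N \<noteq> 0" using Efun_pos[OF assms(3)] assms(4) by (smt (verit))
  have g: "\<And>x. x \<in> {a..b} \<Longrightarrow> 1 + 2*x + 2*p \<noteq> 0" using assms by auto
  have cE: "continuous_on S (\<lambda>x. Efun L q x)" for S unfolding Efun_def by (intro continuous_intros)
  have E2: "\<And>x. (Efun L q x + N)^2 \<noteq> 0" "\<And>x. (Efun L q x + N)^3 \<noteq> 0" using E by auto
  have c1: "continuous_on {a..b} (\<lambda>x. gder l p x)" unfolding gder_def
    by (intro continuous_intros) (use g in auto)
  have c2: "continuous_on {a..b} (\<lambda>x. gfun l p x)" unfolding gfun_def
    by (intro continuous_intros) (use g in auto)
  have c3: "continuous_on {a..b} (\<lambda>x. wfun N L q x)" unfolding wfun_def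
    by (intro continuous_intros cE) (use E2 in auto)
  have c4: "continuous_on {a..b} (\<lambda>x. wder N L q x)" unfolding wder_def
    by (intro continuous_intros cE) (use E2 in auto)
  show ?thesis unfolding Fd_def by (intro continuous_intros c1 c2 c3 c4)
qed

lemma Fd_bound:
  assumes a: "\<alpha> \<ge> 0" and p: "p \<ge> 0" and l: "l \<ge> 0" and L: "L \<ge> 0" and q: "q > 0" and N: "N > 0"
  shows "\<bar>Fd N L q l p \<alpha>\<bar> \<le> 2 * exp (- l / (1 + 2*\<alpha> + 2*p)) * wfun N L q \<alpha> * (1 + l + (1 + 2*\<alpha> + 2*p) * L)"
proof -
  define \<gamma> where "\<gamma> = 1 + 2*\<alpha> + 2*p"
  define e where "e = exp (- l / \<gamma>)"
  define E where "E = Efun L q \<alpha>"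
  define w where "w = wfun N L q \<alpha>"
  have \<gamma>: "\<gamma> \<ge> 1" using a p unfolding \<gamma>_def by simp
  have ep: "e > 0" unfolding e_def by simp
  have Ep: "E > 0" unfolding E_def using Efun_pos[OF q] .
  have w0: "w \<ge> 0" unfolding w_def using wfun_nonneg[OF q N L] .
  have wE: "w = N^2 * E * L / (E + N)^2" unfolding w_def wfun_def E_def ..
  have g0: "gder l p \<alpha> \<ge> 0" unfolding gder_def \<gamma>_def[symmetric] using \<gamma> l by simp
  have lg: "l / \<gamma> \<le> l" using \<gamma> l by (simp add: divide_le_eq) (metis mult_le_cancel_left1 not_le order.trans mult_right_mono)
  have g1: "gder l p \<alpha> \<le> 2 * e * (1 + l)" unfolding gder_def e_def \<gamma>_def[symmetric] using ep lg unfolding e_def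
    by (intro mult_left_mono) auto
  have b1: "\<bar>gder l p \<alpha> * w\<bar> \<le> 2 * e * w * (1 + l)"
  proof -
    have "\<bar>gder l p \<alpha> * w\<bar> = gder l p \<alpha> * w" using g0 w0 by (simp add: abs_of_nonneg)
    also have "\<dots> \<le> 2 * e * (1 + l) * w" using g1 w0 by (rule mult_right_mono)
    finally show ?thesis by (simp only: ac_simps)
  qed
  have b2: "\<bar>wder N L q \<alpha>\<bar> \<le> 2 * L * w"
  proof -
    have EN: "E + N > 0" using Ep N by simp
    have "wder N L q \<alpha> = 2 * L * w * ((N - E) / (E + N))"
      unfolding wder_def E_def[symmetric] wE using EN by (simp add: field_simps power2_eq_square power3_eq_cube)
    moreover have "\<bar>(N - E) / (E + N)\<bar> \<le> 1" using Ep N EN by (simp add: abs_divide)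
    moreover have "2 * L * w \<ge> 0" using L w0 by simp
    moreover have "\<And>c r::real. 0 \<le> c \<Longrightarrow> \<bar>r\<bar> \<le> 1 \<Longrightarrow> \<bar>c * r\<bar> \<le> c"
      by (simp add: abs_mult mult_left_le)
    ultimately show ?thesis by metis
  qed
  have b3: "\<bar>gfun l p \<alpha> * wder N L q \<alpha>\<bar> \<le> \<gamma> * e * (2 * L * w)"
  proof -
    have "\<bar>gfun l p \<alpha> * wder N L q \<alpha>\<bar> = \<gamma> * e * \<bar>wder N L q \<alpha>\<bar>"
      unfolding gfun_def \<gamma>_def[symmetric] e_def[symmetric] using \<gamma> ep by (simp add: abs_mult)
    also have "\<dots> \<le> \<gamma> * e * (2 * L * w)" using b2 \<gamma> ep by (intro mult_left_mono) auto
    finally show ?thesis .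
  qed
  have "\<bar>Fd N L q l p \<alpha>\<bar> \<le> 2 * e * w * (1 + l) + \<gamma> * e * (2 * L * w)"
    unfolding Fd_def w_def[symmetric] using b1 b3 abs_triangle_ineq[of "gder l p \<alpha> * w" "gfun l p \<alpha> * wder N L q \<alpha>"] by linarith
  also have "\<dots> = 2 * e * w * (1 + l + \<gamma> * L)" by (simp add: algebra_simps)
  finally show ?thesis unfolding e_def \<gamma>_def w_def .
qed

definition psi :: "real \<Rightarrow> real \<Rightarrow> real" where
  "psi x i = (if i \<le> x then 1 else (x / i) * sqrt (x / i))"

lemma poly_exp_bound:
  assumes "u \<ge> (0::real)" shows "(1 + 2*u)^4 \<le> 65536 * exp (u/2)"
proof -
  have a: "1 + u/8 \<le> exp (u/8)" by simp
  have "(1 + 2*u)^4 \<le> (16 * (1 + u/8))^4" using assms by (intro power_mono) auto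
  also have "\<dots> = 16^4 * (1 + u/8)^4" by (simp only: power_mult_distrib)
  also have "(1 + u/8)^4 \<le> exp (u/8)^4" using assms a by (intro power_mono) auto
  also have "exp (u/8)^4 = exp (u/2)" by (simp add: exp_of_nat_mult[symmetric])
  finally show ?thesis by simp
qed

lemma mono4: "0 \<le> (a::real) \<Longrightarrow> a \<le> b \<Longrightarrow> 0 \<le> c \<Longrightarrow> c \<le> d \<Longrightarrow> a * c \<le> b * d"
  by (meson mult_mono order.trans)

lemma term_bounds:
  fixes N l \<gamma> L C i A :: real
  assumes N: "N \<ge> 2" and l: "l = ln N" and g: "\<gamma> \<ge> 1" and i: "i \<ge> 1" and L: "L = ln i"
    and C: "C \<ge> 1" and A: "A > 0" "exp (\<gamma> * L) \<le> A * C^2" "A \<le> C^2 * exp (\<gamma> * L)"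
  shows "N * A * L / (A + N)^2 * (1 + l + \<gamma> * L)^2 \<le> 2^20 * C^2 * \<gamma> * l^3"
    and "(N * A * L / (A + N)^2)^2 * (1 + l + \<gamma> * L)^2 \<le> 2^20 * C^4 * l^4 * psi (exp (l / \<gamma>)) i"
proof -
  define r where "r = N * A * L / (A + N)^2"
  define x where "x = exp (l / \<gamma>)"
  have l23: "l \<ge> 2/3" using ln2_ge_two_thirds N unfolding l by (smt (verit) ln_le_cancel_iff)
  have L0: "L \<ge> 0" using i L by simp
  have Np: "N > 0" using N by simp
  have Nexp: "exp l = N" using l Np by simp
  have iexp: "exp L = i" using L i by simp
  have r0: "r \<ge> 0" unfolding r_def using A Np L0 by simp
  have r1: "r \<le> L * A / N"
  proof -
    have "N * A * L / (A + N)^2 \<le> N * A * L / N^2"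
      using A Np L0 by (intro divide_left_mono) (auto intro!: power_mono)
    then show ?thesis unfolding r_def using Np by (simp add: power2_eq_square ac_simps)
  qed
  have r2: "r \<le> L * N / A"
  proof -
    have "N * A * L / (A + N)^2 \<le> N * A * L / A^2"
      using A Np L0 by (intro divide_left_mono) (auto intro!: power_mono)
    then show ?thesis unfolding r_def using A by (simp add: power2_eq_square ac_simps)
  qed
  have C2: "C^2 \<ge> 1" using C by simp
  have goal1: "r * (1 + l + \<gamma> * L)^2 \<le> 2^20 * C^2 * \<gamma> * l^3 \<and> r^2 * (1 + l + \<gamma> * L)^2 \<le> 2^20 * C^4 * l^4 * psi x i"
  proof (cases "i \<le> x")
    case True
    have "L \<le> l / \<gamma>"
    proof -
      have "ln i \<le> ln x" using True i by (subst ln_le_cancel_iff) (auto simp: x_def)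
      then show ?thesis unfolding L x_def by simp
    qed
    then have gL: "\<gamma> * L \<le> l" using g by (simp add: field_simps)
    have "L \<le> \<gamma> * L" using g L0 by (simp add: mult_le_cancel_right1)
    then have Ll: "L \<le> l" using gL by simp
    have "exp (\<gamma> * L) \<le> N" using gL Nexp by (metis exp_le_cancel_iff)
    then have "C^2 * exp (\<gamma> * L) \<le> C^2 * N" using C2 by (intro mult_left_mono) auto
    then have AN: "A \<le> N * C^2" using A(3) by (simp add: mult.commute)
    have rC: "r \<le> L * C^2"
    proof -
      have "L * A / N \<le> L * (N * C^2) / N" using L0 AN Np by (intro divide_right_mono mult_left_mono) auto
      then show ?thesis using r1 Np by simp
    qed
    have f: "1 + l + \<gamma> * L \<le> 4 * l" using gL l23 by simp
    have f0: "0 \<le> 1 + l + \<gamma> * L" using l23 L0 g by simp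
    have f2: "(1 + l + \<gamma> * L)^2 \<le> 16 * l^2" using power_mono[OF f f0, of 2] by (simp add: power_mult_distrib)
    have rl: "r \<le> l * C^2" using rC mult_right_mono[OF Ll, of "C^2"] by simp
    have "r * (1 + l + \<gamma> * L)^2 \<le> (l * C^2) * (16 * l^2)"
      using r0 rl f2 by (intro mono4) auto
    also have "\<dots> \<le> 2^20 * C^2 * \<gamma> * l^3"
    proof -
      have "(l * C^2) * (16 * l^2) = 16 * C^2 * 1 * l^3" by (simp add: power2_eq_square power3_eq_cube)
      also have "\<dots> \<le> 2^20 * C^2 * \<gamma> * l^3" using g l23 C2
        by (intro mult_right_mono mult_mono) auto
      finally show ?thesis .
    qed
    finally have I: "r * (1 + l + \<gamma> * L)^2 \<le> 2^20 * C^2 * \<gamma> * l^3" .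
    have "r^2 * (1 + l + \<gamma> * L)^2 \<le> (l * C^2)^2 * (16 * l^2)"
      using r0 rl f2 by (intro mono4 power_mono) auto
    also have "\<dots> = 16 * C^4 * l^4" by (simp add: power2_eq_square power4_eq_xxxx)
    also have "\<dots> \<le> 2^20 * C^4 * l^4 * psi x i" using True unfolding psi_def by simp
    finally show ?thesis using I by simp
  next
    case False
    define s where "s = L - l / \<gamma>"
    define u where "u = \<gamma> * s"
    have "l / \<gamma> < L"
    proof -
      have "ln x < ln i" using False i by (subst ln_less_cancel_iff) (auto simp: x_def)
      then show ?thesis unfolding L x_def by simp
    qed
    then have s0: "s > 0" unfolding s_def by simp
    have us: "u \<ge> s" unfolding u_def using s0 g by (simp add: mult_le_cancel_right1)
    have u0: "u \<ge> 0" using us s0 by simp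
    have gL: "\<gamma> * L = l + u" unfolding u_def s_def using g by (simp add: field_simps)
    have "L \<le> \<gamma> * L" using g L0 by (simp add: mult_le_cancel_right1)
    then have Lu: "L \<le> l + u" using gL by simp
    have "exp (\<gamma> * L) = N * exp u" using gL Nexp by (simp add: exp_add)
    then have "N * exp u \<le> A * C^2" using A(2) by simp
    then have AN: "N * exp u / C^2 \<le> A" using C2 A(1) by (simp add: divide_le_eq)
    have rC: "r \<le> (l + u) * C^2 * exp (- u)"
    proof -
      have "L * N / A \<le> L * N / (N * exp u / C^2)"
        using L0 AN Np C2 A(1) by (intro divide_left_mono) (auto intro!: divide_pos_pos mult_pos_pos)
      also have "\<dots> = L * C^2 * exp (- u)" using Np C2 by (simp add: field_simps exp_minus)
      also have "\<dots> \<le> (l + u) * C^2 * exp (- u)" using Lu C2 by (intro mult_right_mono) auto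
      finally show ?thesis using r2 by simp
    qed
    have h1: "1 * u \<le> (2 * l) * u" using l23 u0 by (intro mult_right_mono) auto
    have h2: "0 \<le> l * u" using l23 u0 by simp
    have lu: "l + u \<le> l * (1 + 2*u)" using h1 h2 by (simp add: algebra_simps)
    have f: "1 + l + \<gamma> * L \<le> 4 * l * (1 + 2*u)" using gL l23 h1 h2 by (simp add: algebra_simps)
    have f0: "0 \<le> 1 + l + \<gamma> * L" using l23 L0 g by simp
    have f2: "(1 + l + \<gamma> * L)^2 \<le> 16 * l^2 * (1 + 2*u)^2" using power_mono[OF f f0, of 2] by (simp add: power_mult_distrib)
    have rC': "r \<le> l * (1 + 2*u) * C^2 * exp (- u)"
    proof -
      have "(l + u) * C^2 * exp (- u) \<le> l * (1 + 2*u) * C^2 * exp (- u)"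
        using lu by (intro mult_right_mono) auto
      then show ?thesis using rC by simp
    qed
    have P: "(1 + 2*u)^4 \<le> 65536 * exp (u/2)" using poly_exp_bound[OF u0] .
    have P1: "1 \<le> 1 + 2*u" using u0 by simp
    have "r * (1 + l + \<gamma> * L)^2 \<le> (l * (1 + 2*u) * C^2 * exp (- u)) * (16 * l^2 * (1 + 2*u)^2)"
      using r0 rC' f2 by (intro mono4) auto
    also have "\<dots> = 16 * C^2 * l^3 * ((1 + 2*u)^3 * exp (- u))" by (simp add: power2_eq_square power3_eq_cube)
    also have "(1 + 2*u)^3 * exp (- u) \<le> 65536"
    proof -
      have "(1 + 2*u)^3 \<le> (1 + 2*u)^4" using P1 by (intro power_increasing) auto
      also have "\<dots> \<le> 65536 * exp (u/2)" by fact
      also have "\<dots> \<le> 65536 * exp u" using u0 by simp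
      finally show ?thesis by (simp add: exp_minus field_simps)
    qed
    then have "16 * C^2 * l^3 * ((1 + 2*u)^3 * exp (- u)) \<le> 16 * C^2 * l^3 * 65536"
      using l23 by (intro mult_left_mono) auto
    also have "\<dots> = 2^20 * (C^2 * l^3) * 1" by simp
    also have "\<dots> \<le> 2^20 * (C^2 * l^3) * \<gamma>" using g l23 C2 by (intro mult_left_mono) auto
    also have "\<dots> = 2^20 * C^2 * \<gamma> * l^3" by (simp add: ac_simps)
    finally have I: "r * (1 + l + \<gamma> * L)^2 \<le> 2^20 * C^2 * \<gamma> * l^3" .
    have "r^2 * (1 + l + \<gamma> * L)^2 \<le> (l * (1 + 2*u) * C^2 * exp (- u))^2 * (16 * l^2 * (1 + 2*u)^2)"
      using r0 rC' f2 by (intro mono4 power_mono) auto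
    also have "\<dots> = 16 * C^4 * l^4 * ((1 + 2*u)^4 * exp (- 2 * u))"
      by (simp add: power2_eq_square power4_eq_xxxx exp_add[symmetric])
    also have "(1 + 2*u)^4 * exp (- 2 * u) \<le> 65536 * exp (- 3 * s / 2)"
    proof -
      have "(1 + 2*u)^4 * exp (- 2 * u) \<le> 65536 * exp (u/2) * exp (- 2 * u)" using P by simp
      also have "\<dots> = 65536 * exp (- 3 * u / 2)" by (simp add: exp_add[symmetric])
      also have "\<dots> \<le> 65536 * exp (- 3 * s / 2)" using us by simp
      finally show ?thesis .
    qed
    also have "exp (- 3 * s / 2) = psi x i"
    proof -
      have xi: "x / i = exp (- s)" unfolding x_def s_def using iexp[symmetric] by (simp add: exp_diff[symmetric])
      have "sqrt (exp (- s)) = exp (- s / 2)" by (rule real_sqrt_unique) (simp_all add: exp_add[symmetric] power2_eq_square)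
      then show ?thesis unfolding psi_def using False xi by (simp add: exp_add[symmetric])
    qed
    finally have II: "r^2 * (1 + l + \<gamma> * L)^2 \<le> 16 * C^4 * l^4 * (65536 * psi x i)"
      using l23 by (simp add: mult_left_mono)
    then show ?thesis using I by simp
  qed
  then show "N * A * L / (A + N)^2 * (1 + l + \<gamma> * L)^2 \<le> 2^20 * C^2 * \<gamma> * l^3"
    "(N * A * L / (A + N)^2)^2 * (1 + l + \<gamma> * L)^2 \<le> 2^20 * C^4 * l^4 * psi (exp (l / \<gamma>)) i"
    unfolding r_def x_def by auto
qed

lemma tele_ineq:
  assumes j: "j \<ge> (1::nat)"
  shows "1 / (real (Suc j) * sqrt (real (Suc j))) \<le> 2 * (1 / sqrt (real j) - 1 / sqrt (real (Suc j)))"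
proof -
  define a where "a = sqrt (real j)"
  define b where "b = sqrt (real (Suc j))"
  have a0: "a > 0" unfolding a_def using j by simp
  have ab: "a \<le> b" unfolding a_def b_def by simp
  have b0: "b > 0" using a0 ab by simp
  have sq: "b^2 = a^2 + 1" unfolding a_def b_def by simp
  have ba: "b - a = 1 / (a + b)"
  proof -
    have "(b - a) * (a + b) = 1" using sq by (simp add: power2_eq_square algebra_simps)
    then show ?thesis using a0 b0 by (simp add: field_simps)
  qed
  have i: "real (Suc j) * sqrt (real (Suc j)) = b^3" unfolding b_def
    by (simp add: power3_eq_cube)
  have "1 / a - 1 / b = (b - a) / (a * b)" using a0 b0 by (simp add: field_simps)
  also have "\<dots> = 1 / (a * b * (a + b))" unfolding ba by (simp add: ac_simps)
  finally have "2 * (1 / a - 1 / b) = 2 / (a * b * (a + b))" by simp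
  moreover have "a * b * (a + b) \<le> b * b * (2 * b)"
    using a0 b0 ab by (intro mult_mono) auto
  then have "1 / b^3 \<le> 2 / (a * b * (a + b))"
  proof -
    assume h: "a * b * (a + b) \<le> b * b * (2 * b)"
    have p: "a * b * (a + b) > 0" using a0 b0 by simp
    have "1 / b^3 = 2 / (b * b * (2 * b))" by (simp add: power3_eq_cube)
    also have "\<dots> \<le> 2 / (a * b * (a + b))" using h p by (intro divide_left_mono) auto
    finally show ?thesis .
  qed
  ultimately have "1 / b^3 \<le> 2 * (1 / a - 1 / b)" by simp
  then show ?thesis using i unfolding a_def b_def by simp
qed

lemma psi_sum:
  fixes x :: real assumes x: "x \<ge> 1"
  shows "(\<Sum>j<m. psi x (real (Suc j))) \<le> 4 * x"
proof -
  define k where "k = nat \<lfloor>x\<rfloor>"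
  have k1: "k \<ge> 1" unfolding k_def using x by linarith
  have kx: "real k \<le> x" "x < real k + 1" unfolding k_def using x by linarith+
  define D where "D j = 1 / sqrt (real j) - 1 / sqrt (real (Suc j))" for j
  have D0: "D j \<ge> 0" if "j \<ge> k" for j
  proof -
    have "j \<noteq> 0" using that k1 by simp
    then have "1 / sqrt (real (Suc j)) \<le> 1 / sqrt (real j)" by (intro divide_left_mono) auto
    then show ?thesis unfolding D_def by simp
  qed
  have xs: "x * sqrt x \<ge> 0" using x by simp
  have pt: "psi x (real (Suc j)) \<le> (if j < k then 1 else 0) + 2 * (x * sqrt x) * (if k \<le> j then D j else 0)" for j
  proof (cases "j < k")
    case True
    then have "real (Suc j) \<le> x" using kx by linarith
    then show ?thesis using True unfolding psi_def by simp
  next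
    case False
    then have gt: "\<not> real (Suc j) \<le> x" using kx by linarith
    have j1: "j \<ge> 1" using False k1 by simp
    have "(x / real (Suc j)) * sqrt (x / real (Suc j)) = (x * sqrt x) * (1 / (real (Suc j) * sqrt (real (Suc j))))"
      by (simp add: real_sqrt_divide)
    also have "\<dots> \<le> (x * sqrt x) * (2 * D j)" unfolding D_def using tele_ineq[OF j1] xs by (intro mult_left_mono) auto
    finally show ?thesis using False gt unfolding psi_def by simp
  qed
  have s1: "(\<Sum>j<m. (if j < k then 1 else 0::real)) \<le> real k"
  proof -
    have "(\<Sum>j<m. (if j < k then 1 else 0::real)) = real (card ({..<m} \<inter> {j. j < k}))"
      by (simp add: sum.If_cases)
    also have "card ({..<m} \<inter> {j. j < k}) \<le> card {..<k}" by (intro card_mono) auto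
    finally show ?thesis by simp
  qed
  have s2: "(\<Sum>j<m. (if k \<le> j then D j else 0)) \<le> 1 / sqrt (real k)"
  proof -
    have "(\<Sum>j<m. (if k \<le> j then D j else 0)) = (\<Sum>j\<in>{..<m} \<inter> {j. k \<le> j}. D j)"
      by (simp add: sum.If_cases)
    also have "\<dots> \<le> (\<Sum>j\<in>{k..<max m k}. D j)"
      using D0 by (intro sum_mono2) (auto simp: max_def)
    also have "\<dots> = 1 / sqrt (real k) - 1 / sqrt (real (max m k))"
      unfolding D_def using sum_Suc_diff'[of k "max m k" "\<lambda>j. - (1 / sqrt (real j))"] by simp
    also have "\<dots> \<le> 1 / sqrt (real k)" by simp
    finally show ?thesis .
  qed
  have "(\<Sum>j<m. psi x (real (Suc j))) \<le> (\<Sum>j<m. (if j < k then 1 else 0) + 2 * (x * sqrt x) * (if k \<le> j then D j else 0))"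
    using pt by (rule sum_mono)
  also have "\<dots> = (\<Sum>j<m. (if j < k then 1 else 0)) + 2 * (x * sqrt x) * (\<Sum>j<m. (if k \<le> j then D j else 0))"
    by (simp add: sum.distrib sum_distrib_left)
  also have "\<dots> \<le> real k + 2 * (x * sqrt x) * (1 / sqrt (real k))"
    using s1 s2 xs by (intro add_mono mult_left_mono) auto
  also have "\<dots> \<le> x + 3 * x"
  proof -
    have "x \<le> 2 * real k" using kx k1 by linarith
    then have "sqrt x \<le> sqrt 2 * sqrt (real k)" by (metis real_sqrt_le_iff real_sqrt_mult)
    then have "sqrt x / sqrt (real k) \<le> sqrt 2" using k1 by (simp add: divide_le_eq)
    also have "sqrt 2 \<le> 3/2" by (rule real_le_lsqrt) (auto simp: power2_eq_square)
    finally have "sqrt x / sqrt (real k) \<le> 3/2" .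
    then have "2 * x * (sqrt x / sqrt (real k)) \<le> 2 * x * (3/2)" using x by (intro mult_left_mono) auto
    then show ?thesis using kx by simp
  qed
  finally show ?thesis by simp
qed

lemma kappa_A:
  fixes C p L k \<alpha> :: real
  assumes C: "C \<ge> 1" and k: "inverse C * exp (- p * L) \<le> k" "k \<le> C * exp (- p * L)"
  defines "A \<equiv> exp ((1 + 2*\<alpha>) * L) * inverse (k^2)"
  shows "A > 0" "exp ((1 + 2*\<alpha> + 2*p) * L) \<le> A * C^2" "A \<le> C^2 * exp ((1 + 2*\<alpha> + 2*p) * L)" "k > 0"
proof -
  have Cp: "C > 0" using C by simp
  have "0 < inverse C * exp (- p * L)" using Cp by simp
  then show kp: "k > 0" using k(1) by linarith
  show "A > 0" unfolding A_def using kp by simp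
  have e: "exp ((1 + 2*\<alpha> + 2*p) * L) = exp ((1 + 2*\<alpha>) * L) * exp (p * L)^2"
    by (simp add: exp_add[symmetric] power2_eq_square algebra_simps)
  have k2u: "k^2 \<le> C^2 * exp (- p * L)^2"
    using power_mono[OF k(2), of 2] kp by (simp add: power_mult_distrib)
  have k2l: "inverse C^2 * exp (- p * L)^2 \<le> k^2"
    using power_mono[OF k(1), of 2] Cp by (simp add: power_mult_distrib)
  have ee: "exp (- p * L)^2 * exp (p * L)^2 = 1" by (simp add: power_mult_distrib[symmetric] exp_add[symmetric])
  show "exp ((1 + 2*\<alpha> + 2*p) * L) \<le> A * C^2"
  proof -
    have h: "1 \<le> inverse (k^2) * C^2 * exp (- p * L)^2" using k2u kp by (simp add: field_simps)
    have "exp (p * L)^2 = exp (p * L)^2 * 1" by simp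
    also have "\<dots> \<le> exp (p * L)^2 * (inverse (k^2) * C^2 * exp (- p * L)^2)" by (rule mult_left_mono) (use h in auto)
    also have "\<dots> = inverse (k^2) * C^2 * (exp (- p * L)^2 * exp (p * L)^2)" by (simp only: ac_simps)
    also have "\<dots> = inverse (k^2) * C^2" unfolding ee by simp
    finally have "exp (p * L)^2 \<le> inverse (k^2) * C^2" .
    then have "exp ((1 + 2*\<alpha>) * L) * exp (p * L)^2 \<le> exp ((1 + 2*\<alpha>) * L) * (inverse (k^2) * C^2)"
      by (intro mult_left_mono) auto
    then show ?thesis unfolding e A_def by (simp add: ac_simps)
  qed
  show "A \<le> C^2 * exp ((1 + 2*\<alpha> + 2*p) * L)"
  proof -
    have "inverse (k^2) \<le> inverse (inverse C^2 * exp (- p * L)^2)"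
      using k2l Cp by (intro le_imp_inverse_le) auto
    also have "\<dots> = C^2 * exp (p * L)^2" using ee Cp by (simp add: field_simps power_mult_distrib exp_minus)
    finally have "exp ((1 + 2*\<alpha>) * L) * inverse (k^2) \<le> exp ((1 + 2*\<alpha>) * L) * (C^2 * exp (p * L)^2)"
      by (intro mult_left_mono) auto
    then show ?thesis unfolding e A_def by (simp add: ac_simps)
  qed
qed

lemma per_j:
  fixes N p C \<alpha> i k mu :: real
  assumes N: "N \<ge> 2" and p: "p \<ge> 0" and C: "C \<ge> 1" and a: "\<alpha> \<ge> 0" and i: "i \<ge> 1"
    and kb: "inverse C * i powr (-p) \<le> k" "k \<le> C * i powr (-p)"
  shows "(4 * (k * mu)^2 / N + 2 / N^2) * (Fd N (ln i) (inverse (k^2)) (ln N) p \<alpha>)^2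
     \<le> 2^24 * C^2 * (1 + 2*\<alpha> + 2*p) * (ln N)^3 * exp (- ln N / (1 + 2*\<alpha> + 2*p))^2
          * (N^2 * i powr (1 + 2*\<alpha>) * mu^2 * ln i / (i powr (1 + 2*\<alpha>) * inverse (k^2) + N)^2)
       + 2^23 * C^4 * (ln N)^4 * exp (- ln N / (1 + 2*\<alpha> + 2*p))^2 * psi (exp (ln N / (1 + 2*\<alpha> + 2*p))) i"
proof -
  define L where "L = ln i"
  define l where "l = ln N"
  define \<gamma> where "\<gamma> = 1 + 2*\<alpha> + 2*p"
  define q where "q = inverse (k^2)"
  define e where "e = exp (- l / \<gamma>)"
  define A where "A = exp ((1 + 2*\<alpha>) * L) * q"
  define r where "r = N * A * L / (A + N)^2"
  have ip: "i > 0" using i by simp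
  have Np: "N > 0" using N by simp
  have g1: "\<gamma> \<ge> 1" unfolding \<gamma>_def using a p by simp
  have L0: "L \<ge> 0" unfolding L_def using i by simp
  have l0: "l \<ge> 0" unfolding l_def using N by simp
  have ipw: "i powr (-p) = exp (- p * L)" unfolding L_def using ip by (simp add: powr_def)
  have ipw2: "i powr (1 + 2*\<alpha>) = exp ((1 + 2*\<alpha>) * L)" unfolding L_def using ip by (simp add: powr_def)
  note kA = kappa_A[OF C kb[unfolded ipw]]
  have Ap: "A > 0" and A2: "exp (\<gamma> * L) \<le> A * C^2" and A3: "A \<le> C^2 * exp (\<gamma> * L)" and kp: "k > 0"
    using kA unfolding A_def q_def \<gamma>_def by (auto simp: mult.commute)
  have q0: "q > 0" unfolding q_def using kp by simp
  have w: "wfun N L q \<alpha> = N * r" unfolding wfun_def Efun_def r_def A_def by (simp add: power2_eq_square)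
  have r0: "r \<ge> 0" unfolding r_def using Ap Np L0 by simp
  have Fb: "\<bar>Fd N L q l p \<alpha>\<bar> \<le> 2 * e * (N * r) * (1 + l + \<gamma> * L)"
    using Fd_bound[OF a p l0 L0 q0 Np] unfolding w e_def \<gamma>_def by simp
  have f0: "0 \<le> 1 + l + \<gamma> * L" using l0 L0 g1 by simp
  have e0: "e > 0" unfolding e_def by simp
  have F2: "(Fd N L q l p \<alpha>)^2 \<le> 4 * e^2 * N^2 * (r^2 * (1 + l + \<gamma> * L)^2)"
  proof -
    have "(Fd N L q l p \<alpha>)^2 = \<bar>Fd N L q l p \<alpha>\<bar>^2" by simp
    also have "\<dots> \<le> (2 * e * (N * r) * (1 + l + \<gamma> * L))^2" using Fb by (intro power_mono) auto
    also have "\<dots> = 4 * e^2 * N^2 * (r^2 * (1 + l + \<gamma> * L)^2)" by (simp add: power_mult_distrib)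
    finally show ?thesis .
  qed
  note TB = term_bounds[OF N l_def g1 i L_def C Ap A2 A3]
  have TB1: "r * (1 + l + \<gamma> * L)^2 \<le> 2^20 * C^2 * \<gamma> * l^3" using TB(1) unfolding r_def .
  have TB2: "r^2 * (1 + l + \<gamma> * L)^2 \<le> 2^20 * C^4 * l^4 * psi (exp (l / \<gamma>)) i" using TB(2) unfolding r_def .
  define HT where "HT = N^2 * i powr (1 + 2*\<alpha>) * mu^2 * ln i / (i powr (1 + 2*\<alpha>) * inverse (k^2) + N)^2"
  have HT: "N * (k * mu)^2 * r = HT"
  proof -
    have "k^2 * q = 1" unfolding q_def using kp by simp
    then show ?thesis unfolding HT_def r_def A_def ipw2 q_def[symmetric] L_def[symmetric]
      by (simp add: field_simps power2_eq_square)
  qed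
  have HT0: "HT \<ge> 0" using HT[symmetric] r0 Np by simp
  have "(4 * (k * mu)^2 / N + 2 / N^2) * (Fd N L q l p \<alpha>)^2
     \<le> (4 * (k * mu)^2 / N + 2 / N^2) * (4 * e^2 * N^2 * (r^2 * (1 + l + \<gamma> * L)^2))"
    using F2 Np by (intro mult_left_mono) auto
  also have "\<dots> = 16 * e^2 * (N * (k * mu)^2 * r) * (r * (1 + l + \<gamma> * L)^2) + 8 * e^2 * (r^2 * (1 + l + \<gamma> * L)^2)"
    using Np by (simp add: field_simps power2_eq_square)
  also have "\<dots> \<le> 16 * e^2 * HT * (2^20 * C^2 * \<gamma> * l^3) + 8 * e^2 * (2^20 * C^4 * l^4 * psi (exp (l / \<gamma>)) i)"
    unfolding HT using TB1 TB2 HT0 by (intro add_mono mult_left_mono) auto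
  also have "\<dots> = 2^24 * C^2 * \<gamma> * l^3 * e^2 * HT + 2^23 * C^4 * l^4 * e^2 * psi (exp (l / \<gamma>)) i"
    by (simp add: algebra_simps)
  finally show ?thesis unfolding HT_def L_def l_def \<gamma>_def e_def q_def by simp
qed

lemma pointwise:
  fixes \<kappa> \<mu> :: "nat \<Rightarrow> real" and N p C \<alpha> :: real and m :: nat
  assumes N: "N \<ge> 2" and p: "p \<ge> 0" and C: "C \<ge> 1" and a: "\<alpha> \<ge> 0"
    and kb: "\<And>i. i \<ge> 1 \<Longrightarrow> inverse C * real i powr (- p) \<le> \<kappa> i \<and> \<kappa> i \<le> C * real i powr (- p)"
    and hs: "summable (\<lambda>j. N^2 * real (Suc j) powr (1 + 2*\<alpha>) * (\<mu> (Suc j))^2 * ln (real (Suc j)) /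
            (real (Suc j) powr (1 + 2*\<alpha>) * inverse ((\<kappa> (Suc j))^2) + N)^2)"
  shows "(\<Sum>j<m. (4 * (\<kappa> (Suc j) * \<mu> (Suc j))^2 / N + 2 / N^2)
            * (Fd N (ln (real (Suc j))) (inverse ((\<kappa> (Suc j))^2)) (ln N) p \<alpha>)^2)
     \<le> 2^25 * C^4 * (ln N)^4 * (N powr (- 1 / (1 + 2*\<alpha> + 2*p)) *
          (1 + (1 + 2*\<alpha> + 2*p) / (N powr (1 / (1 + 2*\<alpha> + 2*p)) * ln N) *
             (\<Sum>j. N^2 * real (Suc j) powr (1 + 2*\<alpha>) * (\<mu> (Suc j))^2 * ln (real (Suc j)) /
            (real (Suc j) powr (1 + 2*\<alpha>) * inverse ((\<kappa> (Suc j))^2) + N)^2)))"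
proof -
  define \<gamma> where "\<gamma> = 1 + 2*\<alpha> + 2*p"
  define l where "l = ln N"
  define e where "e = exp (- l / \<gamma>)"
  define x where "x = exp (l / \<gamma>)"
  define HT where "HT j = N^2 * real (Suc j) powr (1 + 2*\<alpha>) * (\<mu> (Suc j))^2 * ln (real (Suc j)) /
            (real (Suc j) powr (1 + 2*\<alpha>) * inverse ((\<kappa> (Suc j))^2) + N)^2" for j
  define H where "H = (\<Sum>j. HT j)"
  have Np: "N > 0" using N by simp
  have g1: "\<gamma> \<ge> 1" unfolding \<gamma>_def using a p by simp
  have l0: "l > 0" unfolding l_def using N by simp
  have e0: "e > 0" unfolding e_def by simp
  have x1: "x \<ge> 1" unfolding x_def using l0 g1 by simp
  have ex: "e * x = 1" unfolding e_def x_def by (simp add: exp_add[symmetric])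
  have HT0: "HT j \<ge> 0" for j unfolding HT_def using N by simp
  have hsum: "summable HT" using hs unfolding HT_def .
  have C2: "C^2 \<le> C^4" using C by (simp add: power_increasing)
  have pj: "(4 * (\<kappa> (Suc j) * \<mu> (Suc j))^2 / N + 2 / N^2)
            * (Fd N (ln (real (Suc j))) (inverse ((\<kappa> (Suc j))^2)) (ln N) p \<alpha>)^2
     \<le> 2^24 * C^2 * \<gamma> * l^3 * e^2 * HT j + 2^23 * C^4 * l^4 * e^2 * psi x (real (Suc j))" for j
  proof -
    have kbj: "inverse C * real (Suc j) powr (-p) \<le> \<kappa> (Suc j)" "\<kappa> (Suc j) \<le> C * real (Suc j) powr (-p)"
      using kb[of "Suc j"] by auto
    have i1: "real (Suc j) \<ge> 1" by simp
    show ?thesis using per_j[OF N p C a i1 kbj, where mu="\<mu> (Suc j)"]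
      unfolding HT_def \<gamma>_def l_def e_def x_def by simp
  qed
  have "(\<Sum>j<m. (4 * (\<kappa> (Suc j) * \<mu> (Suc j))^2 / N + 2 / N^2)
            * (Fd N (ln (real (Suc j))) (inverse ((\<kappa> (Suc j))^2)) (ln N) p \<alpha>)^2)
     \<le> (\<Sum>j<m. 2^24 * C^2 * \<gamma> * l^3 * e^2 * HT j + 2^23 * C^4 * l^4 * e^2 * psi x (real (Suc j)))"
    using pj by (rule sum_mono)
  also have "\<dots> = 2^24 * C^2 * \<gamma> * l^3 * e^2 * (\<Sum>j<m. HT j) + 2^23 * C^4 * l^4 * e^2 * (\<Sum>j<m. psi x (real (Suc j)))"
    by (simp add: sum.distrib sum_distrib_left)
  also have "\<dots> \<le> 2^24 * C^4 * \<gamma> * l^3 * e^2 * H + 2^23 * C^4 * l^4 * e^2 * (4 * x)"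
  proof -
    have h1: "(\<Sum>j<m. HT j) \<le> H" unfolding H_def using hsum HT0 by (intro sum_le_suminf) auto
    have h2: "(\<Sum>j<m. psi x (real (Suc j))) \<le> 4 * x" using psi_sum[OF x1] .
    have P0: "0 \<le> \<gamma> * l^3 * e^2" using g1 l0 by simp
    have S0: "0 \<le> (\<Sum>j<m. HT j)" using HT0 by (intro sum_nonneg) auto
    have "C^2 * (\<Sum>j<m. HT j) \<le> C^4 * H" using C2 h1 S0 by (intro mult_mono) auto
    then have A: "2^24 * (\<gamma> * l^3 * e^2) * (C^2 * (\<Sum>j<m. HT j)) \<le> 2^24 * (\<gamma> * l^3 * e^2) * (C^4 * H)"
      using P0 by (intro mult_left_mono) auto
    have B: "(2^23 * C^4 * l^4 * e^2) * (\<Sum>j<m. psi x (real (Suc j))) \<le> (2^23 * C^4 * l^4 * e^2) * (4 * x)"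
      using h2 l0 by (intro mult_left_mono) auto
    from add_mono[OF A B] show ?thesis by (simp add: ac_simps)
  qed
  also have "\<dots> \<le> 2^25 * C^4 * l^4 * (e * (1 + \<gamma> / (x * l) * H))"
  proof -
    have xe: "x = 1 / e" using ex e0 by (simp add: field_simps)
    have H0: "H \<ge> 0" unfolding H_def using hsum HT0 by (intro suminf_nonneg) auto
    have r: "2^25 * C^4 * l^4 * (e * (1 + \<gamma> / (x * l) * H)) = 2^25 * C^4 * l^4 * e + 2^25 * C^4 * \<gamma> * l^3 * e^2 * H"
      unfolding xe using l0 e0 by (simp add: field_simps power2_eq_square power3_eq_cube power4_eq_xxxx)
    have s2: "2^23 * C^4 * l^4 * e^2 * (4 * x) = 2^25 * C^4 * l^4 * e"
      unfolding xe using e0 by (simp add: field_simps power2_eq_square)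
    have s1: "2^24 * C^4 * \<gamma> * l^3 * e^2 * H \<le> 2^25 * C^4 * \<gamma> * l^3 * e^2 * H"
      using g1 l0 H0 by (intro mult_right_mono) auto
    show ?thesis unfolding r s2[symmetric] using s1 by simp
  qed
  also have "e = N powr (- 1 / (1 + 2*\<alpha> + 2*p))" unfolding e_def l_def \<gamma>_def using Np by (simp add: powr_def)
  also have "x = N powr (1 / (1 + 2*\<alpha> + 2*p))" unfolding x_def l_def \<gamma>_def using Np by (simp add: powr_def)
  finally show ?thesis unfolding H_def HT_def l_def \<gamma>_def .
qed

lemma per_j2:
  fixes N p C \<alpha> i k mu :: real
  assumes N: "N \<ge> 2" and p: "p \<ge> 0" and C: "C \<ge> 1" and a: "\<alpha> \<ge> 0" and i: "i \<ge> 1"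
    and kb: "inverse C * i powr (-p) \<le> k" "k \<le> C * i powr (-p)"
  shows "N^2 * i powr (1 + 2*\<alpha>) * inverse (k^2) * ln i / (i powr (1 + 2*\<alpha>) * inverse (k^2) + N)^2 \<ge> 0"
    "N^2 * i powr (1 + 2*\<alpha>) * mu^2 * ln i / (i powr (1 + 2*\<alpha>) * inverse (k^2) + N)^2 \<le> N^2 * C^4 * mu^2"
    "N^2 * i powr (1 + 2*\<alpha>) * inverse (k^2) * ln i / (i powr (1 + 2*\<alpha>) * inverse (k^2) + N)^2 * ((k * mu)^2 + 1/N)
      \<le> N^2 * C^4 * mu^2 + N * C^2 * (ln i * i powr (- (1 + 2*\<alpha>)))"
proof -
  define L where "L = ln i"
  define \<gamma> where "\<gamma> = 1 + 2*\<alpha> + 2*p"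
  define q where "q = inverse (k^2)"
  define E where "E = i powr (1 + 2*\<alpha>)"
  define A where "A = E * q"
  have ip: "i > 0" using i by simp
  have Np: "N > 0" using N by simp
  have L0: "L \<ge> 0" unfolding L_def using i by simp
  have ipw: "i powr (-p) = exp (- p * L)" unfolding L_def using ip by (simp add: powr_def)
  have ipw2: "E = exp ((1 + 2*\<alpha>) * L)" unfolding E_def L_def using ip by (simp add: powr_def)
  note kA = kappa_A[OF C kb[unfolded ipw]]
  have Ap: "A > 0" and A2: "exp (\<gamma> * L) \<le> A * C^2" and kp: "k > 0"
    using kA unfolding A_def q_def \<gamma>_def ipw2 by (auto simp: mult.commute)
  have Cp: "C > 0" using C by simp
  have E0: "E > 0" unfolding E_def using ip by simp
  have q0: "q > 0" unfolding q_def using kp by simp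
  have Ek: "E = A * k^2" unfolding A_def q_def using kp by simp
  have k2: "k^2 \<le> C^2"
  proof -
    have "i powr (-p) \<le> 1" using i p by (metis neg_le_0_iff_le not_one_le_zero powr_mono powr_zero_eq_one)
    then have "k \<le> C" using kb(2) Cp by (smt (verit) mult_left_le)
    then show ?thesis using kp by (intro power_mono) auto
  qed
  have LeL: "L \<le> exp (\<gamma> * L)"
  proof -
    have "L \<le> 1 + L" by simp
    also have "\<dots> \<le> exp L" by simp
    also have "\<dots> \<le> exp (\<gamma> * L)" unfolding \<gamma>_def using L0 a p by (simp add: mult_le_cancel_right1)
    finally show ?thesis .
  qed
  show "N^2 * i powr (1 + 2*\<alpha>) * inverse (k^2) * ln i / (i powr (1 + 2*\<alpha>) * inverse (k^2) + N)^2 \<ge> 0"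
    using L0 E0 unfolding L_def E_def by simp
  have HT: "N^2 * i powr (1 + 2*\<alpha>) * mu^2 * ln i / (i powr (1 + 2*\<alpha>) * inverse (k^2) + N)^2
     = N^2 * k^2 * mu^2 * (A * L / (A + N)^2)"
  proof -
    have kq: "q * k^2 = 1" unfolding q_def using kp by simp
    show ?thesis unfolding E_def[symmetric] L_def[symmetric] q_def[symmetric] A_def[symmetric] Ek
      using kq by (simp add: field_simps)
  qed
  have r: "A * L / (A + N)^2 \<le> C^2"
  proof -
    have "A * L / (A + N)^2 \<le> A * L / A^2" using Ap Np L0 by (intro divide_left_mono) (auto intro!: power_mono)
    also have "\<dots> = L / A" using Ap by (simp add: power2_eq_square)
    also have "\<dots> \<le> L / (exp (\<gamma> * L) / C^2)" using A2 Cp L0 Ap by (intro divide_left_mono) (auto simp: divide_le_eq intro!: divide_pos_pos mult_pos_pos)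
    also have "\<dots> = C^2 * (L / exp (\<gamma> * L))" by (simp add: field_simps)
    also have "\<dots> \<le> C^2 * 1" using LeL L0 by (intro mult_left_mono) (auto simp: divide_le_eq)
    finally show ?thesis by simp
  qed
  have HTb: "N^2 * i powr (1 + 2*\<alpha>) * mu^2 * ln i / (i powr (1 + 2*\<alpha>) * inverse (k^2) + N)^2 \<le> N^2 * C^4 * mu^2"
  proof -
    have "k^2 * (A * L / (A + N)^2) \<le> C^2 * C^2" using k2 r Ap L0 by (intro mult_mono) auto
    then have "N^2 * mu^2 * (k^2 * (A * L / (A + N)^2)) \<le> N^2 * mu^2 * (C^2 * C^2)" by (intro mult_left_mono) auto
    then show ?thesis unfolding HT by (simp add: ac_simps power2_eq_square power4_eq_xxxx)
  qed
  then show "N^2 * i powr (1 + 2*\<alpha>) * mu^2 * ln i / (i powr (1 + 2*\<alpha>) * inverse (k^2) + N)^2 \<le> N^2 * C^4 * mu^2" .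
  have w: "N^2 * i powr (1 + 2*\<alpha>) * inverse (k^2) * ln i / (i powr (1 + 2*\<alpha>) * inverse (k^2) + N)^2 = N^2 * (A * L / (A + N)^2)"
    unfolding E_def[symmetric] L_def[symmetric] q_def[symmetric] A_def[symmetric] by (simp add: A_def field_simps)
  have wN: "N^2 * (A * L / (A + N)^2) / N \<le> N * C^2 * (L * i powr (- (1 + 2*\<alpha>)))"
  proof -
    have "A * L / (A + N)^2 \<le> A * L / A^2" using Ap Np L0 by (intro divide_left_mono) (auto intro!: power_mono)
    also have "\<dots> = L / A" using Ap by (simp add: power2_eq_square)
    also have "\<dots> \<le> L / (exp (\<gamma> * L) / C^2)" using A2 Cp L0 Ap by (intro divide_left_mono) (auto simp: divide_le_eq intro!: divide_pos_pos mult_pos_pos)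
    also have "\<dots> = C^2 * (L * exp (- (\<gamma> * L)))" by (simp add: field_simps exp_minus)
    also have "\<dots> \<le> C^2 * (L * i powr (- (1 + 2*\<alpha>)))"
    proof -
      have "exp (- (\<gamma> * L)) \<le> exp (- ((1 + 2*\<alpha>) * L))" unfolding \<gamma>_def using L0 p by (simp add: algebra_simps)
      also have "\<dots> = i powr (- (1 + 2*\<alpha>))" unfolding L_def using ip by (simp add: powr_def algebra_simps)
      finally show ?thesis using L0 by (intro mult_left_mono) auto
    qed
    finally have "A * L / (A + N)^2 \<le> C^2 * (L * i powr (- (1 + 2*\<alpha>)))" .
    then have "N * (A * L / (A + N)^2) \<le> N * (C^2 * (L * i powr (- (1 + 2*\<alpha>))))" using Np by (intro mult_left_mono) auto
    then show ?thesis using Np by (simp add: power2_eq_square)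
  qed
  have "N^2 * i powr (1 + 2*\<alpha>) * inverse (k^2) * ln i / (i powr (1 + 2*\<alpha>) * inverse (k^2) + N)^2 * ((k * mu)^2 + 1/N)
     = N^2 * i powr (1 + 2*\<alpha>) * mu^2 * ln i / (i powr (1 + 2*\<alpha>) * inverse (k^2) + N)^2 + N^2 * (A * L / (A + N)^2) / N"
  proof -
    have "\<And>X. N^2 * X * ((k * mu)^2 + 1/N) = N^2 * k^2 * mu^2 * X + N^2 * X / N" using Np by (simp add: field_simps power2_eq_square)
    then show ?thesis unfolding w HT by blast
  qed
  also have "\<dots> \<le> N^2 * C^4 * mu^2 + N * C^2 * (ln i * i powr (- (1 + 2*\<alpha>)))"
    using HTb wN unfolding L_def by (rule add_mono)
  finally show "N^2 * i powr (1 + 2*\<alpha>) * inverse (k^2) * ln i / (i powr (1 + 2*\<alpha>) * inverse (k^2) + N)^2 * ((k * mu)^2 + 1/N)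
      \<le> N^2 * C^4 * mu^2 + N * C^2 * (ln i * i powr (- (1 + 2*\<alpha>)))" .
qed

lemma ln_powr_bound:
  fixes i \<alpha> :: real assumes i: "i \<ge> 1" and a: "\<alpha> > 0"
  shows "ln i * i powr (- (1 + 2*\<alpha>)) \<le> (1/\<alpha>) * i powr (- (1 + \<alpha>))"
proof -
  have ip: "i > 0" using i by simp
  have "ln (i powr \<alpha>) \<le> i powr \<alpha> - 1" using ln_le_minus_one[of "i powr \<alpha>"] ip by simp
  then have "ln (i powr \<alpha>) \<le> i powr \<alpha>" by simp
  then have "\<alpha> * ln i \<le> i powr \<alpha>" using ip by (simp add: ln_powr)
  then have l: "ln i \<le> (1/\<alpha>) * i powr \<alpha>" using a by (simp add: field_simps)
  have "ln i * i powr (- (1 + 2*\<alpha>)) \<le> (1/\<alpha>) * i powr \<alpha> * i powr (- (1 + 2*\<alpha>))"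
    using l by (intro mult_right_mono) auto
  also have "\<dots> = (1/\<alpha>) * i powr (- (1 + \<alpha>))" using ip by (simp add: powr_add[symmetric] mult.assoc algebra_simps)
  finally show ?thesis .
qed

lemma summable_ln_powr:
  fixes \<alpha> :: real assumes a: "\<alpha> > 0"
  shows "summable (\<lambda>j. ln (real (Suc j)) * real (Suc j) powr (- (1 + 2*\<alpha>)))"
proof (rule summable_comparison_test')
  have "summable (\<lambda>j. real j powr (- (1 + \<alpha>)))" using a by (simp add: summable_real_powr_iff)
  then have "summable (\<lambda>j. real (Suc j) powr (- (1 + \<alpha>)))" by (subst summable_Suc_iff)
  then show "summable (\<lambda>j. (1/\<alpha>) * real (Suc j) powr (- (1 + \<alpha>)))" by (rule summable_mult)
  show "norm (ln (real (Suc j)) * real (Suc j) powr (- (1 + 2*\<alpha>))) \<le> (1/\<alpha>) * real (Suc j) powr (- (1 + \<alpha>))" for j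
    using ln_powr_bound[OF _ a, of "real (Suc j)"] by simp
qed

theorem lemma5p3:
  fixes M :: "'a measure" and Z :: "nat \<Rightarrow> 'a \<Rightarrow> real"
    and \<kappa> :: "nat \<Rightarrow> real" and p C :: real
  assumes "prob_space M"
    and "prob_space.indep_vars M (\<lambda>_. borel) Z UNIV"
    and "\<And>i. distributed M lborel (Z i) (\<lambda>x. ennreal (std_normal_density x))"
    and "p \<ge> 0" and "C \<ge> 1"
    and "\<And>i. i \<ge> 1 \<Longrightarrow> inverse C * real i powr (- p) \<le> \<kappa> i \<and> \<kappa> i \<le> C * real i powr (- p)"
  shows "\<exists>K>0. \<forall>(\<mu>::nat \<Rightarrow> real) (\<alpha>\<^sub>1::real) \<alpha>\<^sub>2 (n::nat).
           summable (\<lambda>i. (\<mu> i)\<^sup>2) \<and> 0 < \<alpha>\<^sub>1 \<and> \<alpha>\<^sub>1 < \<alpha>\<^sub>2 \<and> n \<ge> 2 \<longrightarrow>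
           var_on M (\<lambda>\<omega>.
               (1 + 2*\<alpha>\<^sub>1 + 2*p) * Mn \<kappa> n (\<lambda>i. obsY \<kappa> \<mu> n Z i \<omega>) \<alpha>\<^sub>1
                 / real n powr (1 / (1 + 2*\<alpha>\<^sub>1 + 2*p))
             - (1 + 2*\<alpha>\<^sub>2 + 2*p) * Mn \<kappa> n (\<lambda>i. obsY \<kappa> \<mu> n Z i \<omega>) \<alpha>\<^sub>2
                 / real n powr (1 / (1 + 2*\<alpha>\<^sub>2 + 2*p)))
           \<le> K * (\<alpha>\<^sub>1 - \<alpha>\<^sub>2)\<^sup>2 * (ln (real n)) ^ 4
               * (SUP \<alpha>\<in>{\<alpha>\<^sub>1..\<alpha>\<^sub>2}. real n powr (- 1 / (1 + 2*\<alpha> + 2*p)) * (1 + hn \<kappa> p \<mu> n \<alpha>))"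
proof -
  note P = assms(1) and I = assms(2) and D = assms(3) and p = assms(4) and C = assms(5) and kb = assms(6)
  have K0: "(2::real)^25 * C^4 > 0" using C by simp
  show ?thesis
  proof (intro exI[of _ "2^25 * C^4"] conjI allI impI K0)
    fix \<mu> :: "nat \<Rightarrow> real" and \<alpha>1 \<alpha>2 :: real and n :: nat
    assume H: "summable (\<lambda>i. (\<mu> i)\<^sup>2) \<and> 0 < \<alpha>1 \<and> \<alpha>1 < \<alpha>2 \<and> n \<ge> 2"
    then have sm0: "summable (\<lambda>i. (\<mu> i)\<^sup>2)" and a1: "0 < \<alpha>1" and a12: "\<alpha>1 < \<alpha>2" and n2: "n \<ge> 2" by auto
    define N where "N = real n"
    have N: "N \<ge> 2" unfolding N_def using n2 by simp
    have Np: "N > 0" using N by simp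
    define l where "l = ln N"
    have l0: "l > 0" unfolding l_def using N by simp
    have sm: "summable (\<lambda>j. (\<mu> (Suc j))^2)" using sm0 by (subst summable_Suc_iff)
    define L where "L j = ln (real (Suc j))" for j
    define q where "q j = inverse ((\<kappa> (Suc j))^2)" for j
    define coef where "coef \<alpha> j = N^2 * real (Suc j) powr (1 + 2*\<alpha>) * inverse ((\<kappa> (Suc j))^2) * ln (real (Suc j)) /
            (real (Suc j) powr (1 + 2*\<alpha>) * inverse ((\<kappa> (Suc j))^2) + N)^2" for \<alpha> j
    define HT where "HT \<alpha> j = N^2 * real (Suc j) powr (1 + 2*\<alpha>) * (\<mu> (Suc j))^2 * ln (real (Suc j)) /
            (real (Suc j) powr (1 + 2*\<alpha>) * inverse ((\<kappa> (Suc j))^2) + N)^2" for \<alpha> j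
    define F where "F j \<alpha> = gfun l p \<alpha> * wfun N (L j) (q j) \<alpha>" for j \<alpha>
    define f where "f \<alpha> = real n powr (- 1 / (1 + 2*\<alpha> + 2*p)) * (1 + hn \<kappa> p \<mu> n \<alpha>)" for \<alpha>
    define S where "S = (SUP \<alpha>\<in>{\<alpha>1..\<alpha>2}. f \<alpha>)"
    have kbj: "inverse C * real (Suc j) powr (-p) \<le> \<kappa> (Suc j)" "\<kappa> (Suc j) \<le> C * real (Suc j) powr (-p)" for j
      using kb[of "Suc j"] by auto
    have i1: "real (Suc j) \<ge> 1" for j by simp
    note pj2 = per_j2[OF N p C _ i1 kbj]
    have coef0: "\<alpha> \<ge> 0 \<Longrightarrow> coef \<alpha> j \<ge> 0" for \<alpha> j unfolding coef_def using pj2(1) by blast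
    have HTb: "\<alpha> \<ge> 0 \<Longrightarrow> HT \<alpha> j \<le> N^2 * C^4 * (\<mu> (Suc j))^2" for \<alpha> j unfolding HT_def using pj2(2) by blast
    have HT0: "HT \<alpha> j \<ge> 0" for \<alpha> j unfolding HT_def using N by simp
    have HTs: "\<alpha> \<ge> 0 \<Longrightarrow> summable (HT \<alpha>)" for \<alpha>
      by (rule summable_comparison_test'[OF summable_mult[OF sm, of "N^2 * C^4"]]) (use HTb HT0 in auto)
    have Hb: "\<alpha> \<ge> 0 \<Longrightarrow> (\<Sum>j. HT \<alpha> j) \<le> N^2 * C^4 * (\<Sum>j. (\<mu> (Suc j))^2)" for \<alpha>
    proof -
      assume a: "\<alpha> \<ge> 0"
      have "(\<Sum>j. HT \<alpha> j) \<le> (\<Sum>j. N^2 * C^4 * (\<mu> (Suc j))^2)"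
        using a by (intro suminf_le HTb HTs summable_mult[OF sm])
      also have "\<dots> = N^2 * C^4 * (\<Sum>j. (\<mu> (Suc j))^2)" using suminf_mult[OF sm, of "N^2 * C^4"] by simp
      finally show ?thesis .
    qed
    have H0: "(\<Sum>j. HT \<alpha> j) \<ge> 0" if "\<alpha> \<ge> 0" for \<alpha> using HTs[OF that] HT0 by (intro suminf_nonneg) auto
    have hn_eq: "hn \<kappa> p \<mu> n \<alpha> = (1 + 2*\<alpha> + 2*p) / (N powr (1 / (1 + 2*\<alpha> + 2*p)) * l) * (\<Sum>j. HT \<alpha> j)" for \<alpha>
      unfolding hn_def HT_def N_def l_def ..
    have xpow: "N powr (1 / (1 + 2*\<alpha> + 2*p)) = exp (l / (1 + 2*\<alpha> + 2*p))" for \<alpha>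
      unfolding l_def using Np by (simp add: powr_def)
    have xpow2: "N powr (- 1 / (1 + 2*\<alpha> + 2*p)) = exp (- l / (1 + 2*\<alpha> + 2*p))" for \<alpha>
      unfolding l_def using Np by (simp add: powr_def)
    define BH where "BH = N^2 * C^4 * (\<Sum>j. (\<mu> (Suc j))^2)"
    have hn0: "hn \<kappa> p \<mu> n \<alpha> \<ge> 0" if "\<alpha> \<ge> 0" for \<alpha>
      unfolding hn_eq xpow using H0[OF that] l0 that p by (intro mult_nonneg_nonneg divide_nonneg_pos mult_pos_pos) auto
    have hnb: "hn \<kappa> p \<mu> n \<alpha> \<le> (1 + 2*\<alpha>2 + 2*p) / l * BH" if "\<alpha> \<in> {\<alpha>1..\<alpha>2}" for \<alpha>
    proof -
      have a0: "\<alpha> \<ge> 0" using that a1 by simp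
      have g0: "1 + 2*\<alpha> + 2*p > 0" using a0 p by simp
      have x1: "exp (l / (1 + 2*\<alpha> + 2*p)) \<ge> 1" using l0 g0 by simp
      have "(1 + 2*\<alpha> + 2*p) / (exp (l / (1 + 2*\<alpha> + 2*p)) * l) \<le> (1 + 2*\<alpha> + 2*p) / (1 * l)"
        using x1 l0 g0 by (intro divide_left_mono mult_right_mono) auto
      also have "\<dots> \<le> (1 + 2*\<alpha>2 + 2*p) / l" using that l0 by (simp add: divide_right_mono)
      finally have c: "(1 + 2*\<alpha> + 2*p) / (exp (l / (1 + 2*\<alpha> + 2*p)) * l) \<le> (1 + 2*\<alpha>2 + 2*p) / l" .
      have "hn \<kappa> p \<mu> n \<alpha> \<le> (1 + 2*\<alpha>2 + 2*p) / l * (\<Sum>j. HT \<alpha> j)"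
        unfolding hn_eq xpow using c H0[OF a0] by (intro mult_right_mono) auto
      also have "\<dots> \<le> (1 + 2*\<alpha>2 + 2*p) / l * BH" unfolding BH_def
        using Hb[OF a0] l0 a12 a1 p by (intro mult_left_mono) auto
      finally show ?thesis .
    qed
    have f0: "f \<alpha> \<ge> 0" if "\<alpha> \<ge> 0" for \<alpha> unfolding f_def using hn0[OF that] by simp
    have fb: "f \<alpha> \<le> 1 + (1 + 2*\<alpha>2 + 2*p) / l * BH" if "\<alpha> \<in> {\<alpha>1..\<alpha>2}" for \<alpha>
    proof -
      have a0: "\<alpha> \<ge> 0" using that a1 by simp
      have g0: "1 + 2*\<alpha> + 2*p > 0" using a0 p by simp
      have e1: "real n powr (- 1 / (1 + 2*\<alpha> + 2*p)) \<le> 1" using xpow2[of \<alpha>] l0 g0 unfolding N_def by simp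
      have "f \<alpha> \<le> 1 * (1 + hn \<kappa> p \<mu> n \<alpha>)" unfolding f_def using e1 hn0[OF a0] by (intro mult_right_mono) auto
      then show ?thesis using hnb[OF that] by simp
    qed
    have bdd: "bdd_above (f ` {\<alpha>1..\<alpha>2})" using fb by (intro bdd_aboveI2) 
    have fle: "f \<alpha> \<le> S" if "\<alpha> \<in> {\<alpha>1..\<alpha>2}" for \<alpha> unfolding S_def using bdd that by (rule cSUP_upper2) simp
    have S0: "S \<ge> 0" using fle[of \<alpha>1] f0[of \<alpha>1] a1 a12 by simp
    define v where "v j = 4 * (\<kappa> (Suc j) * \<mu> (Suc j))^2 / N + 2 / N^2" for j
    have v0: "v j \<ge> 0" for j unfolding v_def using Np by simp
    have kp: "\<kappa> (Suc j) > 0" for j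
    proof -
      have "0 < inverse C * real (Suc j) powr (-p)" using C by simp
      then show ?thesis using kbj(1)[of j] by linarith
    qed
    have q0: "q j > 0" for j unfolding q_def using kp[of j] by simp
    have pw: "(\<Sum>j<m. v j * (Fd N (L j) (q j) l p x)^2) \<le> 2^25 * C^4 * l^4 * S" if "x \<in> {\<alpha>1..\<alpha>2}" for x m
    proof -
      have x0: "x \<ge> 0" using that a1 by simp
      have "(\<Sum>j<m. v j * (Fd N (L j) (q j) l p x)^2) \<le> 2^25 * C^4 * l^4 * f x"
        using pointwise[OF N p C x0 kb HTs[OF x0, unfolded HT_def], of m]
        unfolding v_def L_def q_def l_def f_def hn_eq N_def HT_def .
      also have "\<dots> \<le> 2^25 * C^4 * l^4 * S" using fle[OF that] l0 C by (intro mult_left_mono) auto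
      finally show ?thesis .
    qed
    have wf: "(\<Sum>j<m. v j * (F j \<alpha>1 - F j \<alpha>2)^2) \<le> (\<alpha>2 - \<alpha>1)^2 * (2^25 * C^4 * l^4 * S)" for m
    proof (rule weighted_ftc[OF _ _ _ v0 pw])
      show "\<alpha>1 \<le> \<alpha>2" using a12 by simp
      show "(F j has_real_derivative Fd N (L j) (q j) l p x) (at x)" if "x \<in> {\<alpha>1..\<alpha>2}" for j x
        unfolding F_def using that a1 p by (intro Ffun_deriv q0 Np) auto
      show "continuous_on {\<alpha>1..\<alpha>2} (Fd N (L j) (q j) l p)" for j using a1 p by (intro Fd_cont q0 Np) auto
    qed
    have ceq: "(1 + 2*\<alpha> + 2*p) / real n powr (1 / (1 + 2*\<alpha> + 2*p)) * coef \<alpha> j = F j \<alpha>" for \<alpha> j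
    proof -
      have "real (Suc j) powr (1 + 2*\<alpha>) = exp ((1 + 2*\<alpha>) * L j)" unfolding L_def by (simp add: powr_def)
      then show ?thesis unfolding F_def gfun_def wfun_def Efun_def coef_def q_def N_def[symmetric] xpow
        by (simp add: exp_minus field_simps L_def)
    qed
    define B where "B = 2^25 * C^4 * (\<alpha>1 - \<alpha>2)^2 * (ln (real n))^4 * S"
    have B0: "B \<ge> 0" unfolding B_def using S0 by simp
    have bnd: "(\<Sum>j<m. ((1 + 2*\<alpha>1 + 2*p) / real n powr (1 / (1 + 2*\<alpha>1 + 2*p)) * coef \<alpha>1 j
             - (1 + 2*\<alpha>2 + 2*p) / real n powr (1 / (1 + 2*\<alpha>2 + 2*p)) * coef \<alpha>2 j)^2
             * (4 * ((\<lambda>i. \<kappa> i * \<mu> i) (Suc j))^2 / N + 2 / N^2)) \<le> B" for m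
    proof -
      have "(\<Sum>j<m. ((1 + 2*\<alpha>1 + 2*p) / real n powr (1 / (1 + 2*\<alpha>1 + 2*p)) * coef \<alpha>1 j
             - (1 + 2*\<alpha>2 + 2*p) / real n powr (1 / (1 + 2*\<alpha>2 + 2*p)) * coef \<alpha>2 j)^2
             * (4 * ((\<lambda>i. \<kappa> i * \<mu> i) (Suc j))^2 / N + 2 / N^2)) = (\<Sum>j<m. v j * (F j \<alpha>1 - F j \<alpha>2)^2)"
        unfolding ceq v_def by (simp add: mult.commute)
      also have "\<dots> \<le> (\<alpha>2 - \<alpha>1)^2 * (2^25 * C^4 * l^4 * S)" by (rule wf)
      also have "\<dots> = B" unfolding B_def l_def N_def by (simp add: power2_commute)
      finally show ?thesis .
    qed
    have s12: "summable (\<lambda>j. coef \<alpha> j * (((\<lambda>i. \<kappa> i * \<mu> i) (Suc j))^2 + 1/N))" if "\<alpha> > 0" for \<alpha>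
    proof (rule summable_comparison_test')
      show "summable (\<lambda>j. N^2 * C^4 * (\<mu> (Suc j))^2 + N * C^2 * (ln (real (Suc j)) * real (Suc j) powr (- (1 + 2*\<alpha>))))"
        by (intro summable_add summable_mult sm summable_ln_powr that)
      fix j
      have a0: "\<alpha> \<ge> 0" using that by simp
      have "coef \<alpha> j * (((\<lambda>i. \<kappa> i * \<mu> i) (Suc j))^2 + 1/N) \<ge> 0" using coef0[OF a0] Np by simp
      then show "norm (coef \<alpha> j * (((\<lambda>i. \<kappa> i * \<mu> i) (Suc j))^2 + 1/N))
          \<le> N^2 * C^4 * (\<mu> (Suc j))^2 + N * C^2 * (ln (real (Suc j)) * real (Suc j) powr (- (1 + 2*\<alpha>)))"
        unfolding coef_def using pj2(3)[OF a0, of j "\<mu> (Suc j)"] by simp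
    qed
    have V: "var_on M (\<lambda>\<omega>. (1 + 2*\<alpha>1 + 2*p) * (S1 - (\<Sum>j. coef \<alpha>1 j * ((\<lambda>i. \<kappa> i * \<mu> i) (Suc j) + Z (Suc j) \<omega> / sqrt N)^2)) / real n powr (1 / (1 + 2*\<alpha>1 + 2*p))
                      - (1 + 2*\<alpha>2 + 2*p) * (S2 - (\<Sum>j. coef \<alpha>2 j * ((\<lambda>i. \<kappa> i * \<mu> i) (Suc j) + Z (Suc j) \<omega> / sqrt N)^2)) / real n powr (1 / (1 + 2*\<alpha>2 + 2*p))) \<le> B" for S1 S2
      by (rule prob_main[OF P I D Np coef0 coef0 s12 s12 B0 bnd]) (use a1 a12 in auto)
    show "var_on M (\<lambda>\<omega>.
               (1 + 2*\<alpha>1 + 2*p) * Mn \<kappa> n (\<lambda>i. obsY \<kappa> \<mu> n Z i \<omega>) \<alpha>1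
                 / real n powr (1 / (1 + 2*\<alpha>1 + 2*p))
             - (1 + 2*\<alpha>2 + 2*p) * Mn \<kappa> n (\<lambda>i. obsY \<kappa> \<mu> n Z i \<omega>) \<alpha>2
                 / real n powr (1 / (1 + 2*\<alpha>2 + 2*p)))
           \<le> 2^25 * C^4 * (\<alpha>1 - \<alpha>2)\<^sup>2 * (ln (real n)) ^ 4
               * (SUP \<alpha>\<in>{\<alpha>1..\<alpha>2}. real n powr (- 1 / (1 + 2*\<alpha> + 2*p)) * (1 + hn \<kappa> p \<mu> n \<alpha>))"
      using V unfolding Mn_def obsY_def B_def S_def f_def coef_def N_def by simp
  qed
qed

end
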